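(* Let $N\ge 2$, $\epsilon>0$, and let $\hat U_0$ be any unitary $N\times N$ matrix. Let $\tilde c(\mu,\nu)=\exp\!\big[-\tfrac12\big(\tfrac{\epsilon N}{\pi}\big)^2\big(\sin^2(\pi\mu/N)+\sin^2(\pi\nu/N)\big)\big]$ for $\mu,\nu\in\{0,\dots,N-1\}$, let $\mathsf{D}_\epsilon$ be the linear map on $M_N(\mathbb{C})$ defined by $\mathsf{D}_\epsilon(\hat T_{(\mu,\nu)})=\tilde c(\mu,\nu)\hat T_{(\mu,\nu)}$ for all $\mu,\nu\in\{0,\dots,N-1\}$, and let $\mathsf{L}_\epsilon=\mathsf{D}_\epsilon\circ\mathsf{U}$, where $\mathsf{U}(\hat\rho)=\hat U_0\hat\rho\hat U_0^\dagger$. Then: (i) $\hat\rho_\infty=\mathbb{I}/N$ satisfies $\mathsf{L}_\epsilon(\hat\rho_\infty)=\hat\rho_\infty$, and $1$ is a non-degenerate eigenvalue of $\mathsf{L}_\epsilon$; (ii) the spectrum of $\mathsf{L}_\epsilon$ is symmetric with respect to the real axis; (iii) the singular values of $\mathsf{L}_\epsilon$ are the numbers $\tilde c(\mu,\nu)$, and every eigenvalue $\lambda$ of $\mathsf{L}_\epsilon$ other than the eigenvalue $1$ associated with $\mathbb{I}/N$ satisfies $$e^{-(\epsilon N/\pi)^2}\;\le\;|\lambda|\;\le\; e^{-\frac12(\epsilon N/\pi)^2\sin^2(\pi/N)}.$$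
   Context: Let $\{|j\rangle\}_{j=0}^{N-1}$ be the standard basis of $\mathbb{C}^N$, indices mod $N$. Let $\hat U|j\rangle=|j+1 \bmod N\rangle$, $\hat V|j\rangle=e^{2\pi\mathrm{i} j/N}|j\rangle$, and define the translation operators $\hat T_{(q,p)}=\hat U^{q}\hat V^{p}e^{\mathrm{i}\pi qp/N}$ for $q,p\in\{0,\dots,N-1\}$; these $N^2$ operators form an orthogonal basis of $M_N(\mathbb{C})$ for the inner product $(\hat A,\hat B)=\mathrm{tr}(\hat A^\dagger\hat B)$, with $\hat T_{(0,0)}=\mathbb{I}$. Singular values and adjoints of linear maps on $M_N(\mathbb{C})$ are taken with respect to this inner product. (Equivalently, $\mathsf{D}_\epsilon(\hat\rho)=\sum_{q,p}c(q,p)\hat T_{(q,p)}\hat\rho\hat T_{(q,p)}^\dagger$ with $c$ the inverse two-dimensional discrete Fourier transform of $\tilde c$.) *)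

theory Defs
  imports Complex_Main "HOL-Library.Multiset" "Jordan_Normal_Form.Char_Poly" "Jordan_Normal_Form.Schur_Decomposition"
begin

definition shiftU :: "nat \<Rightarrow> complex mat" where
  "shiftU N = mat N N (\<lambda>(i,j). if i = (j + 1) mod N then 1 else 0)"

definition clockV :: "nat \<Rightarrow> complex mat" where
  "clockV N = mat N N (\<lambda>(i,j). if i = j then exp (2 * pi * \<i> * of_nat j / of_nat N) else 0)"

definition transl :: "nat \<Rightarrow> nat \<Rightarrow> nat \<Rightarrow> complex mat" where
  "transl N q p = exp (\<i> * pi * of_nat q * of_nat p / of_nat N) \<cdot>\<^sub>m (shiftU N ^\<^sub>m q * clockV N ^\<^sub>m p)"

definition ctilde :: "nat \<Rightarrow> real \<Rightarrow> nat \<Rightarrow> nat \<Rightarrow> real" where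
  "ctilde N \<epsilon> \<mu> \<nu> = exp (- (1/2) * (\<epsilon> * real N / pi)\<^sup>2 *
      ((sin (pi * real \<mu> / real N))\<^sup>2 + (sin (pi * real \<nu> / real N))\<^sup>2))"

definition linear_on_mats :: "nat \<Rightarrow> (complex mat \<Rightarrow> complex mat) \<Rightarrow> bool" where
  "linear_on_mats N L \<longleftrightarrow>
     (\<forall>A \<in> carrier_mat N N. L A \<in> carrier_mat N N) \<and>
     (\<forall>A \<in> carrier_mat N N. \<forall>B \<in> carrier_mat N N. L (A + B) = L A + L B) \<and>
     (\<forall>a. \<forall>A \<in> carrier_mat N N. L (a \<cdot>\<^sub>m A) = a \<cdot>\<^sub>m L A)"

definition unitary_mat :: "nat \<Rightarrow> complex mat \<Rightarrow> bool" where
  "unitary_mat N U \<longleftrightarrow> U \<in> carrier_mat N N \<and> U * mat_adjoint U = 1\<^sub>m N"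

definition is_eigenvalue :: "nat \<Rightarrow> (complex mat \<Rightarrow> complex mat) \<Rightarrow> complex \<Rightarrow> bool" where
  "is_eigenvalue N L lam \<longleftrightarrow> (\<exists>X \<in> carrier_mat N N. X \<noteq> 0\<^sub>m N N \<and> L X = lam \<cdot>\<^sub>m X)"

definition mat_unit :: "nat \<Rightarrow> nat \<Rightarrow> nat \<Rightarrow> complex mat" where
  "mat_unit N i j = mat N N (\<lambda>(k,l). if k = i \<and> l = j then 1 else 0)"

text \<open>Matrix of a linear map on M_N(C) w.r.t. the orthonormal basis of matrix units
  (basis index k corresponds to the unit (k div N, k mod N)).\<close>
definition rep_map :: "nat \<Rightarrow> (complex mat \<Rightarrow> complex mat) \<Rightarrow> complex mat" where
  "rep_map N L = mat (N*N) (N*N)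
     (\<lambda>(k,l). L (mat_unit N (l div N) (l mod N)) $$ (k div N, k mod N))"

definition alg_mult :: "nat \<Rightarrow> (complex mat \<Rightarrow> complex mat) \<Rightarrow> complex \<Rightarrow> nat" where
  "alg_mult N L lam = order lam (char_poly (rep_map N L))"

text \<open>Singular values (with multiplicity) of a linear map on M_N(C) w.r.t. the
  Hilbert--Schmidt inner product: the nonnegative square roots of the eigenvalues of L^* L.
  Since matrix units form an orthonormal basis, the adjoint of L is represented by the
  conjugate transpose of rep_map N L.\<close>
definition singular_values :: "nat \<Rightarrow> (complex mat \<Rightarrow> complex mat) \<Rightarrow> real multiset" where
  "singular_values N L = (THE S. (\<forall>s \<in># S. 0 \<le> s) \<and>
      char_poly (mat_adjoint (rep_map N L) * rep_map N L) =
        (\<Prod>s \<in># S. [:- complex_of_real (s\<^sup>2), 1:]))"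

end

theory Submission
  imports Defs
begin

definition rt :: "nat \<Rightarrow> nat \<Rightarrow> complex" where
  "rt N m = exp (2 * pi * \<i> * of_nat m / of_nat N)"

definition ph :: "nat \<Rightarrow> nat \<Rightarrow> nat \<Rightarrow> complex" where
  "ph N q p = exp (\<i> * pi * of_nat q * of_nat p / of_nat N)"

lemma unit_cnj: "cmod z = 1 \<Longrightarrow> cnj z * z = 1"
  by (metis complex_norm_square mult.commute of_real_1 power_one)

lemma rt_norm: "cmod (rt N m) = 1"
  unfolding rt_def norm_exp_eq_Re by simp

lemma ph_norm: "cmod (ph N q p) = 1"
  unfolding ph_def norm_exp_eq_Re by simp

lemma rt_add: "rt N (a + b) = rt N a * rt N b"
  unfolding rt_def by (simp add: exp_add[symmetric] add_divide_distrib distrib_left)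

lemma rt_0[simp]: "rt N 0 = 1" by (simp add: rt_def)

lemma rt_mult_N: assumes "N > 0" shows "rt N (a * N) = 1"
proof -
  have "2 * pi * \<i> * of_nat (a * N) / of_nat N = of_nat a * (2 * complex_of_real pi * \<i>)"
    using assms by (simp add: field_simps)
  then show ?thesis unfolding rt_def by (simp add: exp_of_nat_mult exp_two_pi_i)
qed

lemma rt_mult_N': assumes "N > 0" shows "rt N (N * a) = 1"
  using rt_mult_N[OF assms] by (metis mult.commute)

lemma rt_mod: assumes "N > 0" shows "rt N (m mod N) = rt N m"
proof -
  have "rt N m = rt N ((m div N) * N + m mod N)" by simp
  also have "\<dots> = rt N (m mod N)" by (simp only: rt_add rt_mult_N[OF assms]) simp
  finally show ?thesis by simp
qed

lemma rt_mult_pow: "rt N (j * m) = rt N m ^ j"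
proof (induction j)
  case 0 then show ?case by simp
next
  case (Suc j)
  have "rt N (Suc j * m) = rt N (j*m + m)" by (simp add: add.commute)
  then show ?case using Suc rt_add by simp
qed

lemma rt_cnj: assumes "N > 0" shows "cnj (rt N m) = rt N (m * (N - 1))"
proof -
  have "rt N m * rt N (m * (N - 1)) = rt N (m * N)"
    using assms by (simp add: rt_add[symmetric] algebra_simps)
  also have "\<dots> = 1" using rt_mult_N[OF assms] by simp
  finally have a: "rt N m * rt N (m * (N - 1)) = 1" .
  have b: "cnj (rt N m) * rt N m = 1" by (rule unit_cnj[OF rt_norm])
  have "rt N m \<noteq> 0" using b by auto
  then show ?thesis using a b
    by (metis mult.commute mult.left_neutral mult.assoc)
qed

lemma rt_eq_1: assumes "N > 0" shows "rt N m = 1 \<longleftrightarrow> N dvd m"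
proof
  assume "N dvd m"
  then obtain a where "m = N * a" by (rule dvdE)
  then show "rt N m = 1" using rt_mult_N[OF assms, of a] by (simp add: mult.commute)
next
  assume h: "rt N m = 1"
  define \<theta> where "\<theta> = 2 * pi * real m / real N"
  have "rt N m = exp (\<i> * complex_of_real \<theta>)"
    unfolding rt_def \<theta>_def by (simp add: field_simps)
  also have "\<dots> = cis \<theta>" by (simp add: cis_conv_exp)
  finally have "cos \<theta> = 1" using h by (metis cis.sel(1) one_complex.sel(1))
  then obtain k :: int where k: "\<theta> = real_of_int k * 2 * pi" using cos_one_2pi_int by auto
  then have "real m = real_of_int k * real N" unfolding \<theta>_def using assms
    by (simp add: field_simps)
  then have "int m = k * int N" by (metis of_int_eq_iff of_int_mult of_int_of_nat_eq)
  then show "N dvd m"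
    by (metis dvd_triv_right int_dvd_int_iff)
qed

lemma int_dvd_small: assumes "int N dvd int a - int b" "a < N" "b < N" shows "a = b"
proof -
  obtain k where k: "int a - int b = int N * k" using assms(1) by (auto elim: dvdE)
  have "\<bar>int a - int b\<bar> < int N" using assms by auto
  have "k = 0"
  proof (rule ccontr)
    assume "k \<noteq> 0"
    then have "\<bar>k\<bar> \<ge> 1" by simp
    then have "int N * \<bar>k\<bar> \<ge> int N" by (simp add: mult_le_cancel_left1)
    then show False using \<open>\<bar>int a - int b\<bar> < int N\<close> k by (simp add: abs_mult)
  qed
  then show "a = b" using k by simp
qed

lemma mod_add_inj: fixes j q q' N :: nat assumes "q < N" "q' < N" "(j + q) mod N = (j + q') mod N" shows "q = q'"
proof -
  have "int (j + q) mod int N = int (j + q') mod int N" using assms(3)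
    by (metis of_nat_mod)
  then have "int N dvd int (j + q) - int (j + q')" by (simp add: mod_eq_dvd_iff)
  then have "int N dvd int q - int q'" by simp
  then show ?thesis using int_dvd_small assms(1,2) by blast
qed

lemma geom_rt: assumes "N > 0" "p < N" "p' < N"
  shows "(\<Sum>j<N. cnj (rt N (j * p)) * rt N (j * p')) = (if p = p' then of_nat N else 0)"
proof -
  define z where "z = rt N (p * (N - 1) + p')"
  have "cnj (rt N (j * p)) * rt N (j * p') = z ^ j" for j
    unfolding z_def rt_cnj[OF assms(1)] rt_add[symmetric] rt_mult_pow[symmetric]
    by (simp add: algebra_simps)
  then have s: "(\<Sum>j<N. cnj (rt N (j * p)) * rt N (j * p')) = (\<Sum>j<N. z ^ j)" by simp
  have zN: "z ^ N = 1" unfolding z_def rt_mult_pow[symmetric] using rt_mult_N'[OF assms(1)]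
    by simp
  have "z = 1 \<longleftrightarrow> p = p'"
  proof -
    have "z = 1 \<longleftrightarrow> N dvd (p * (N - 1) + p')" unfolding z_def using rt_eq_1[OF assms(1)] by simp
    also have "\<dots> \<longleftrightarrow> int N dvd int p' - int p"
    proof -
      have e: "p * (N - 1) + p' + p = N * p + p'" using assms(1) by (cases N) (auto simp: algebra_simps)
      have "int (p * (N - 1) + p') + int p = int N * int p + int p'"
        by (metis e of_nat_add of_nat_mult)
      then have "int (p * (N - 1) + p') = int N * (int p) + (int p' - int p)" by linarith
      then show ?thesis
        by (metis dvd_add_right_iff dvd_triv_left int_dvd_int_iff)
    qed
    also have "\<dots> \<longleftrightarrow> p = p'" using int_dvd_small[of N p' p] assms by auto
    finally show ?thesis .
  qed
  then show ?thesis unfolding s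
    using geometric_sum[of z N] zN by (auto simp: lessThan_atLeast0)
qed


lemma mult_entry: assumes "A \<in> carrier_mat n m" "B \<in> carrier_mat m k" "i < n" "j < k"
  shows "(A * B) $$ (i,j) = (\<Sum>l<m. A $$ (i,l) * B $$ (l,j))"
  using assms by (simp add: scalar_prod_def lessThan_atLeast0)

lemma mv_entry: assumes "A \<in> carrier_mat n m" "v \<in> carrier_vec m" "i < n"
  shows "(A *\<^sub>v v) $ i = (\<Sum>l<m. A $$ (i,l) * v $ l)"
  using assms by (simp add: scalar_prod_def lessThan_atLeast0)

lemma adj_carrier: "A \<in> carrier_mat n m \<Longrightarrow> mat_adjoint A \<in> carrier_mat m n"
  unfolding mat_adjoint_def by auto

lemma adj_dims[simp]: "dim_row (mat_adjoint A) = dim_col A" "dim_col (mat_adjoint A) = dim_row A"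
  unfolding mat_adjoint_def by auto

lemma adj_index: "A \<in> carrier_mat n m \<Longrightarrow> i < m \<Longrightarrow> j < n \<Longrightarrow> mat_adjoint A $$ (i,j) = cnj (A $$ (j,i))"
  unfolding mat_adjoint_def by (simp add: mat_of_rows_def conjugate_complex_def)

lemma shiftU_carrier[simp]: "shiftU N \<in> carrier_mat N N"
  unfolding shiftU_def by simp

lemma clockV_carrier[simp]: "clockV N \<in> carrier_mat N N"
  unfolding clockV_def by simp

lemma shiftU_pow: "i < N \<Longrightarrow> j < N \<Longrightarrow> (shiftU N ^\<^sub>m q) $$ (i,j) = (if i = (j + q) mod N then 1 else 0)"
proof (induction q arbitrary: i j)
  case 0
  then show ?case by (simp add: shiftU_def)
next
  case (Suc q)
  have c: "shiftU N ^\<^sub>m q \<in> carrier_mat N N" by simp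
  have "(shiftU N ^\<^sub>m Suc q) $$ (i,j) = (\<Sum>l<N. (shiftU N ^\<^sub>m q) $$ (i,l) * shiftU N $$ (l,j))"
    using Suc.prems by (simp add: mult_entry[OF c shiftU_carrier])
  also have "\<dots> = (\<Sum>l<N. if l = (j+1) mod N then (if i = (l+q) mod N then 1 else 0) else 0)"
    using Suc by (intro sum.cong) (auto simp: shiftU_def)
  also have "\<dots> = (if i = ((j+1) mod N + q) mod N then 1 else 0)"
    using Suc.prems by (simp add: sum.delta)
  also have "\<dots> = (if i = (j + Suc q) mod N then 1 else 0)"
    by (simp add: mod_add_left_eq)
  finally show ?case .
qed

lemma clockV_pow: "i < N \<Longrightarrow> j < N \<Longrightarrow> (clockV N ^\<^sub>m p) $$ (i,j) = (if i = j then rt N (j * p) else 0)"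
proof (induction p arbitrary: i j)
  case 0
  then show ?case by (simp add: clockV_def)
next
  case (Suc p)
  have c: "clockV N ^\<^sub>m p \<in> carrier_mat N N" by simp
  have "(clockV N ^\<^sub>m Suc p) $$ (i,j) = (\<Sum>l<N. (clockV N ^\<^sub>m p) $$ (i,l) * clockV N $$ (l,j))"
    using Suc.prems by (simp add: mult_entry[OF c clockV_carrier])
  also have "\<dots> = (\<Sum>l<N. if l = j then (if i = j then rt N (j * p) * rt N j else 0) else 0)"
    using Suc by (intro sum.cong) (auto simp: clockV_def rt_def)
  also have "\<dots> = (if i = j then rt N (j * Suc p) else 0)"
    using Suc.prems by (simp add: sum.delta rt_add[symmetric] add.commute)
  finally show ?case .
qed

lemma transl_carrier[simp]: "transl N q p \<in> carrier_mat N N"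
  unfolding transl_def
  by (intro smult_carrier_mat mult_carrier_mat[OF pow_carrier_mat[OF shiftU_carrier] pow_carrier_mat[OF clockV_carrier]])

lemma transl_dims[simp]: "dim_row (transl N q p) = N" "dim_col (transl N q p) = N"
  using transl_carrier[of N q p] by (metis carrier_matD(1), metis carrier_matD(2))

lemma transl_entry: assumes "i < N" "j < N"
  shows "transl N q p $$ (i,j) = ph N q p * (if i = (j + q) mod N then rt N (j * p) else 0)"
proof -
  have c1: "shiftU N ^\<^sub>m q \<in> carrier_mat N N" by simp
  have c2: "clockV N ^\<^sub>m p \<in> carrier_mat N N" by simp
  have c12: "shiftU N ^\<^sub>m q * clockV N ^\<^sub>m p \<in> carrier_mat N N" using mult_carrier_mat[OF c1 c2] .
  have "(shiftU N ^\<^sub>m q * clockV N ^\<^sub>m p) $$ (i,j)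
      = (\<Sum>l<N. (shiftU N ^\<^sub>m q) $$ (i,l) * (clockV N ^\<^sub>m p) $$ (l,j))"
    using assms by (simp add: mult_entry[OF c1 c2])
  also have "\<dots> = (\<Sum>l<N. if l = j then (if i = (j + q) mod N then rt N (j * p) else 0) else 0)"
    using assms by (intro sum.cong) (auto simp: shiftU_pow clockV_pow)
  also have "\<dots> = (if i = (j + q) mod N then rt N (j * p) else 0)"
    using assms by (simp add: sum.delta)
  moreover have "transl N q p $$ (i,j) = ph N q p * (shiftU N ^\<^sub>m q * clockV N ^\<^sub>m p) $$ (i,j)"
    unfolding transl_def ph_def using assms carrier_matD[OF c12] by (simp add: index_smult_mat)
  ultimately show ?thesis by simp
qed

lemma transl_00: assumes "N > 0" shows "transl N 0 0 = 1\<^sub>m N"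
  by (rule eq_matI) (auto simp: transl_entry ph_def)

definition tv :: "nat \<Rightarrow> nat \<Rightarrow> complex mat" where
  "tv N l = transl N (l div N) (l mod N)"

lemma divN: "k < N * N \<Longrightarrow> k div N < (N::nat)"
  by (rule less_mult_imp_div_less)
lemma modN: "k < N * N \<Longrightarrow> k mod N < (N::nat)"
  by (cases N) auto

lemma lt_pair: "i < N \<Longrightarrow> j < N \<Longrightarrow> i * N + j < N * (N::nat)"
proof -
  assume "i < N" "j < N"
  then have "i * N + j < (i + 1) * N" by simp
  also have "\<dots> \<le> N * N" using mult_le_mono1[of "i+1" N N] \<open>i < N\<close> by simp
  finally show ?thesis .
qed

lemma bij_pairs: fixes N :: nat shows "bij_betw (\<lambda>k. (k div N, k mod N)) {..<N*N} ({..<N} \<times> {..<N})"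
  by (rule bij_betw_byWitness[where f' = "\<lambda>(i,j). i * N + j"]) (auto simp: divN modN lt_pair)

lemma sum_pairs: fixes f :: "nat \<Rightarrow> nat \<Rightarrow> 'a::comm_monoid_add" shows "(\<Sum>k<N*N. f (k div N) (k mod N)) = (\<Sum>i<N. \<Sum>j<N. f i j)"
proof -
  have "(\<Sum>k<N*N. f (k div N) (k mod N)) = (\<Sum>x\<in>{..<N} \<times> {..<N}. f (fst x) (snd x))"
    using sum.reindex_bij_betw[OF bij_pairs, of "\<lambda>x. f (fst x) (snd x)"] by simp
  also have "\<dots> = (\<Sum>i<N. \<Sum>j<N. f i j)" by (simp add: sum.cartesian_product split_def)
  finally show ?thesis .
qed

lemma idx_eq: "(a::nat) = b \<longleftrightarrow> a div N = b div N \<and> a mod N = b mod N"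
  by (metis div_mult_mod_eq)

lemma transl_orth: assumes "N > 0" "q < N" "p < N" "q' < N" "p' < N"
  shows "(\<Sum>i<N. \<Sum>j<N. cnj (transl N q p $$ (i,j)) * transl N q' p' $$ (i,j))
       = (if q = q' \<and> p = p' then of_nat N else 0)"
proof -
  define X where "X j = cnj (ph N q p) * ph N q' p' * (cnj (rt N (j * p)) * rt N (j * p'))" for j
  have "(\<Sum>i<N. \<Sum>j<N. cnj (transl N q p $$ (i,j)) * transl N q' p' $$ (i,j))
      = (\<Sum>i<N. \<Sum>j<N. if i = (j + q) mod N \<and> i = (j + q') mod N then X j else 0)"
    by (intro sum.cong refl) (auto simp: transl_entry X_def)
  also have "\<dots> = (\<Sum>j<N. \<Sum>i<N. if i = (j + q) mod N \<and> i = (j + q') mod N then X j else 0)"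
    by (rule sum.swap)
  also have "\<dots> = (\<Sum>j<N. if q = q' then X j else 0)"
  proof (intro sum.cong refl)
    fix j assume "j \<in> {..<N}"
    have "(\<Sum>i<N. if i = (j + q) mod N \<and> i = (j + q') mod N then X j else 0)
        = (\<Sum>i<N. if i = (j + q) mod N then (if (j + q) mod N = (j + q') mod N then X j else 0) else 0)"
      by (intro sum.cong) auto
    also have "\<dots> = (if (j + q) mod N = (j + q') mod N then X j else 0)"
      using assms(1) by (simp add: sum.delta)
    also have "\<dots> = (if q = q' then X j else 0)"
      using mod_add_inj[OF assms(2,4)] by auto
    finally show "(\<Sum>i<N. if i = (j + q) mod N \<and> i = (j + q') mod N then X j else 0) = (if q = q' then X j else 0)" .
  qed
  also have "\<dots> = (if q = q' \<and> p = p' then of_nat N else 0)"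
  proof (cases "q = q'")
    case True
    have "(\<Sum>j<N. X j) = cnj (ph N q p) * ph N q' p' * (if p = p' then of_nat N else 0)"
      unfolding X_def sum_distrib_left[symmetric] geom_rt[OF assms(1,3,5)] ..
    also have "\<dots> = (if p = p' then of_nat N else 0)"
      using True unit_cnj[OF ph_norm] by auto
    finally show ?thesis using True by simp
  qed simp
  finally show ?thesis .
qed

definition sq :: "nat \<Rightarrow> complex" where "sq N = complex_of_real (sqrt (real N))"

definition Fm :: "nat \<Rightarrow> complex mat" where
  "Fm N = mat (N*N) (N*N) (\<lambda>(k,l). tv N l $$ (k div N, k mod N) / sq N)"

lemma Fm_carrier[simp]: "Fm N \<in> carrier_mat (N*N) (N*N)"
  unfolding Fm_def by simp

lemma Fm_dims[simp]: "dim_row (Fm N) = N*N" "dim_col (Fm N) = N*N"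
  unfolding Fm_def by auto

lemma sq_sq: "cnj (sq N) * sq N = of_nat N"
  unfolding sq_def by (simp flip: of_real_mult) 

lemma Fm_unitary: assumes "N > 0" shows "mat_adjoint (Fm N) * Fm N = 1\<^sub>m (N*N)"
proof (rule eq_matI)
  fix a b assume ab: "a < dim_row (1\<^sub>m (N*N))" "b < dim_col (1\<^sub>m (N*N))"
  then have a: "a < N*N" and b: "b < N*N" by auto
  have "(mat_adjoint (Fm N) * Fm N) $$ (a,b) = (\<Sum>k<N*N. cnj (Fm N $$ (k,a)) * Fm N $$ (k,b))"
    using a b by (subst mult_entry[OF adj_carrier[OF Fm_carrier] Fm_carrier]) (auto simp: adj_index[OF Fm_carrier])
  also have "\<dots> = (\<Sum>k<N*N. cnj (tv N a $$ (k div N, k mod N)) * tv N b $$ (k div N, k mod N)) / (cnj (sq N) * sq N)"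
    unfolding sum_divide_distrib
    by (intro sum.cong refl) (simp add: Fm_def a b)
  also have "\<dots> = (\<Sum>i<N. \<Sum>j<N. cnj (tv N a $$ (i,j)) * tv N b $$ (i,j)) / of_nat N"
    by (simp only: sum_pairs[of "\<lambda>i j. cnj (tv N a $$ (i,j)) * tv N b $$ (i,j)"] sq_sq)
  also have "\<dots> = (if a = b then 1 else 0)"
    unfolding tv_def using transl_orth[OF assms divN[OF a] modN[OF a] divN[OF b] modN[OF b]] assms
    by (auto simp: idx_eq[of a b N])
  finally show "(mat_adjoint (Fm N) * Fm N) $$ (a,b) = 1\<^sub>m (N*N) $$ (a,b)" using a b by simp
qed (auto simp: adj_carrier[OF Fm_carrier])

lemma Fm_unitary': assumes "N > 0" shows "Fm N * mat_adjoint (Fm N) = 1\<^sub>m (N*N)"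
  using mat_mult_left_right_inverse[OF adj_carrier[OF Fm_carrier] Fm_carrier Fm_unitary[OF assms]] .


definition vm :: "nat \<Rightarrow> complex mat \<Rightarrow> complex vec" where
  "vm N X = vec (N*N) (\<lambda>k. X $$ (k div N, k mod N))"

lemma vm_carrier[simp]: "vm N X \<in> carrier_vec (N*N)"
  unfolding vm_def by simp

lemma vm_index[simp]: "k < N*N \<Longrightarrow> vm N X $ k = X $$ (k div N, k mod N)"
  unfolding vm_def by simp

lemma vm_dim[simp]: "dim_vec (vm N X) = N*N"
  unfolding vm_def by simp

lemma vm_inj: assumes "X \<in> carrier_mat N N" "Y \<in> carrier_mat N N" "vm N X = vm N Y" shows "X = Y"
proof (rule eq_matI)
  fix i j assume "i < dim_row Y" "j < dim_col Y"
  then have ij: "i < N" "j < N" using assms by auto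
  have "vm N X $ (i*N+j) = vm N Y $ (i*N+j)" using assms by simp
  then show "X $$ (i,j) = Y $$ (i,j)" using lt_pair[OF ij] ij by simp
qed (use assms in auto)

fun msum :: "nat \<Rightarrow> nat \<Rightarrow> (nat \<Rightarrow> complex mat) \<Rightarrow> complex mat" where
  "msum N 0 f = 0\<^sub>m N N"
| "msum N (Suc m) f = msum N m f + f m"

lemma msum_carrier: "(\<forall>l<m. f l \<in> carrier_mat N N) \<Longrightarrow> msum N m f \<in> carrier_mat N N"
  by (induction m) auto

lemma msum_index: "(\<forall>l<m. f l \<in> carrier_mat N N) \<Longrightarrow> i < N \<Longrightarrow> j < N \<Longrightarrow>
   msum N m f $$ (i,j) = (\<Sum>l<m. f l $$ (i,j))"
proof (induction m)
  case 0 then show ?case by simp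
next
  case (Suc m)
  have "f m \<in> carrier_mat N N" using Suc.prems by auto
  then show ?case using Suc by auto
qed

lemma lin_carrier: "linear_on_mats N L \<Longrightarrow> A \<in> carrier_mat N N \<Longrightarrow> L A \<in> carrier_mat N N"
  unfolding linear_on_mats_def by auto

lemma lin_add: "linear_on_mats N L \<Longrightarrow> A \<in> carrier_mat N N \<Longrightarrow> B \<in> carrier_mat N N \<Longrightarrow> L (A + B) = L A + L B"
  unfolding linear_on_mats_def by auto

lemma lin_smult: "linear_on_mats N L \<Longrightarrow> A \<in> carrier_mat N N \<Longrightarrow> L (a \<cdot>\<^sub>m A) = a \<cdot>\<^sub>m L A"
  unfolding linear_on_mats_def by auto

lemma lin_zero: assumes "linear_on_mats N L" shows "L (0\<^sub>m N N) = 0\<^sub>m N N"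
proof -
  have z: "0\<^sub>m N N \<in> carrier_mat N N" by simp
  have "L (0\<^sub>m N N) = L (0 \<cdot>\<^sub>m 0\<^sub>m N N)" by simp
  also have "\<dots> = 0 \<cdot>\<^sub>m L (0\<^sub>m N N)" using lin_smult[OF assms z] .
  also have "\<dots> = 0\<^sub>m N N" using lin_carrier[OF assms z] by auto
  finally show ?thesis .
qed

lemma lin_msum: assumes "linear_on_mats N L" "\<forall>l<m. A l \<in> carrier_mat N N"
  shows "L (msum N m (\<lambda>l. a l \<cdot>\<^sub>m A l)) = msum N m (\<lambda>l. a l \<cdot>\<^sub>m L (A l))"
  using assms(2)
proof (induction m)
  case 0 then show ?case using lin_zero[OF assms(1)] by simp
next
  case (Suc m)
  have c1: "msum N m (\<lambda>l. a l \<cdot>\<^sub>m A l) \<in> carrier_mat N N" using Suc.prems by (intro msum_carrier) auto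
  have c2: "a m \<cdot>\<^sub>m A m \<in> carrier_mat N N" using Suc.prems by auto
  have "L (msum N (Suc m) (\<lambda>l. a l \<cdot>\<^sub>m A l)) = L (msum N m (\<lambda>l. a l \<cdot>\<^sub>m A l)) + L (a m \<cdot>\<^sub>m A m)"
    using lin_add[OF assms(1) c1 c2] by simp
  also have "\<dots> = msum N m (\<lambda>l. a l \<cdot>\<^sub>m L (A l)) + a m \<cdot>\<^sub>m L (A m)"
    using Suc lin_smult[OF assms(1)] by auto
  finally show ?case by simp
qed

lemma mat_unit_carrier[simp]: "mat_unit N i j \<in> carrier_mat N N"
  unfolding mat_unit_def by simp

lemma mat_expand: assumes "X \<in> carrier_mat N N"
  shows "X = msum N (N*N) (\<lambda>l. X $$ (l div N, l mod N) \<cdot>\<^sub>m mat_unit N (l div N) (l mod N))"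
proof (rule eq_matI)
  let ?f = "\<lambda>l. X $$ (l div N, l mod N) \<cdot>\<^sub>m mat_unit N (l div N) (l mod N)"
  have c: "\<forall>l<N*N. ?f l \<in> carrier_mat N N" by simp
  fix i j assume "i < dim_row (msum N (N*N) ?f)" "j < dim_col (msum N (N*N) ?f)"
  then have ij: "i < N" "j < N" using msum_carrier[OF c] by auto
  have "msum N (N*N) ?f $$ (i,j) = (\<Sum>l<N*N. ?f l $$ (i,j))" using msum_index[OF c ij] .
  also have "\<dots> = (\<Sum>l<N*N. if l = i*N+j then X $$ (i,j) else 0)"
  proof (intro sum.cong refl)
    fix l assume "l \<in> {..<N*N}"
    have "(i = l div N \<and> j = l mod N) \<longleftrightarrow> l = i*N+j" using ij by auto
    then show "?f l $$ (i,j) = (if l = i*N+j then X $$ (i,j) else 0)"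
      using ij by (auto simp: mat_unit_def)
  qed
  also have "\<dots> = X $$ (i,j)" using lt_pair[OF ij] by (simp add: sum.delta)
  finally show "X $$ (i,j) = msum N (N*N) ?f $$ (i,j)" by simp
qed (use assms msum_carrier[of "N*N" "\<lambda>l. X $$ (l div N, l mod N) \<cdot>\<^sub>m mat_unit N (l div N) (l mod N)" N] in auto)

lemma rep_map_carrier[simp]: "rep_map N L \<in> carrier_mat (N*N) (N*N)"
  unfolding rep_map_def by simp

lemma rep_map_dims[simp]: "dim_row (rep_map N L) = N*N" "dim_col (rep_map N L) = N*N"
  unfolding rep_map_def by simp_all

lemma rep_map_index: "k < N*N \<Longrightarrow> l < N*N \<Longrightarrow> rep_map N L $$ (k,l) = L (mat_unit N (l div N) (l mod N)) $$ (k div N, k mod N)"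
  unfolding rep_map_def by simp

lemma rep_map_vec: assumes L: "linear_on_mats N L" and X: "X \<in> carrier_mat N N"
  shows "rep_map N L *\<^sub>v vm N X = vm N (L X)"
proof (rule eq_vecI)
  let ?E = "\<lambda>l. mat_unit N (l div N) (l mod N)"
  let ?a = "\<lambda>l. X $$ (l div N, l mod N)"
  fix k assume "k < dim_vec (vm N (L X))"
  then have k: "k < N*N" by simp
  have ck: "k div N < N" "k mod N < N" using divN[OF k] modN[OF k] by auto
  have "(rep_map N L *\<^sub>v vm N X) $ k = (\<Sum>l<N*N. rep_map N L $$ (k,l) * vm N X $ l)"
    using mv_entry[OF rep_map_carrier vm_carrier k] .
  also have "\<dots> = (\<Sum>l<N*N. ?a l * L (?E l) $$ (k div N, k mod N))"
    using k by (intro sum.cong refl) (auto simp: rep_map_index)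
  also have "\<dots> = msum N (N*N) (\<lambda>l. ?a l \<cdot>\<^sub>m L (?E l)) $$ (k div N, k mod N)"
  proof -
    have c: "\<forall>l<N*N. ?a l \<cdot>\<^sub>m L (?E l) \<in> carrier_mat N N" using lin_carrier[OF L] by simp
    have d: "\<And>l. dim_row (L (?E l)) = N" "\<And>l. dim_col (L (?E l)) = N"
      using lin_carrier[OF L mat_unit_carrier] by (auto dest: carrier_matD)
    show ?thesis using msum_index[OF c ck] ck by (simp add: d)
  qed
  also have "\<dots> = L X $$ (k div N, k mod N)"
    using lin_msum[OF L, of "N*N" ?E ?a] mat_expand[OF X] by simp
  finally show "(rep_map N L *\<^sub>v vm N X) $ k = vm N (L X) $ k" using k by simp
qed simp

lemma tv_carrier[simp]: "tv N l \<in> carrier_mat N N"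
  unfolding tv_def by simp

lemma repF: assumes L: "linear_on_mats N L" and k: "k < N*N" and l: "l < N*N"
  shows "(rep_map N L * Fm N) $$ (k,l) = L (tv N l) $$ (k div N, k mod N) / sq N"
proof -
  have "(rep_map N L * Fm N) $$ (k,l) = (\<Sum>m<N*N. rep_map N L $$ (k,m) * Fm N $$ (m,l))"
    using mult_entry[OF rep_map_carrier Fm_carrier k l] .
  also have "\<dots> = (\<Sum>m<N*N. rep_map N L $$ (k,m) * vm N (tv N l) $ m) / sq N"
    unfolding sum_divide_distrib using l by (intro sum.cong refl) (simp add: Fm_def)
  also have "\<dots> = (rep_map N L *\<^sub>v vm N (tv N l)) $ k / sq N"
    using mv_entry[OF rep_map_carrier vm_carrier k] by simp
  also have "\<dots> = L (tv N l) $$ (k div N, k mod N) / sq N"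
    using rep_map_vec[OF L tv_carrier] k by simp
  finally show ?thesis .
qed

lemma lin_agree: assumes N: "N > 0" and L1: "linear_on_mats N L1" and L2: "linear_on_mats N L2"
  and agree: "\<forall>q<N. \<forall>p<N. L1 (transl N q p) = L2 (transl N q p)"
  and X: "X \<in> carrier_mat N N"
  shows "L1 X = L2 X"
proof -
  have "rep_map N L1 * Fm N = rep_map N L2 * Fm N"
  proof (rule eq_matI)
    fix k l assume "k < dim_row (rep_map N L2 * Fm N)" "l < dim_col (rep_map N L2 * Fm N)"
    then have k: "k < N*N" and l: "l < N*N" by auto
    have "L1 (tv N l) = L2 (tv N l)" unfolding tv_def using agree divN[OF l] modN[OF l] by auto
    then show "(rep_map N L1 * Fm N) $$ (k,l) = (rep_map N L2 * Fm N) $$ (k,l)"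
      using repF[OF L1 k l] repF[OF L2 k l] by simp
  qed auto
  then have "rep_map N L1 * Fm N * mat_adjoint (Fm N) = rep_map N L2 * Fm N * mat_adjoint (Fm N)" by simp
  then have R: "rep_map N L1 = rep_map N L2"
    using Fm_unitary'[OF N]
    by (simp add: assoc_mult_mat[OF rep_map_carrier Fm_carrier adj_carrier[OF Fm_carrier]])
  have "vm N (L1 X) = vm N (L2 X)"
    using rep_map_vec[OF L1 X] rep_map_vec[OF L2 X] R by simp
  then show ?thesis using vm_inj lin_carrier[OF L1 X] lin_carrier[OF L2 X] by blast
qed


definition Uch :: "complex mat \<Rightarrow> complex mat \<Rightarrow> complex mat" where
  "Uch U0 \<rho> = U0 * \<rho> * mat_adjoint U0"

definition Cm :: "nat \<Rightarrow> real \<Rightarrow> complex mat" where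
  "Cm N \<epsilon> = mat (N*N) (N*N) (\<lambda>(i,j). if i = j then complex_of_real (ctilde N \<epsilon> (i div N) (i mod N)) else 0)"

definition Wm :: "nat \<Rightarrow> complex mat \<Rightarrow> complex mat" where
  "Wm N U0 = rep_map N (Uch U0)"

definition Wp :: "nat \<Rightarrow> complex mat \<Rightarrow> complex mat" where
  "Wp N U0 = mat_adjoint (Fm N) * Wm N U0 * Fm N"

definition Gm :: "nat \<Rightarrow> real \<Rightarrow> complex mat \<Rightarrow> complex mat" where
  "Gm N \<epsilon> U0 = Cm N \<epsilon> * Wp N U0"

lemma Cm_carrier[simp]: "Cm N \<epsilon> \<in> carrier_mat (N*N) (N*N)" unfolding Cm_def by simp
lemma Wm_carrier[simp]: "Wm N U0 \<in> carrier_mat (N*N) (N*N)" unfolding Wm_def by simp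
lemma Wp_carrier[simp]: "Wp N U0 \<in> carrier_mat (N*N) (N*N)" unfolding Wp_def
  by (meson Fm_carrier Wm_carrier adj_carrier mult_carrier_mat)
lemma Gm_carrier[simp]: "Gm N \<epsilon> U0 \<in> carrier_mat (N*N) (N*N)" unfolding Gm_def
  by (meson Cm_carrier Wp_carrier mult_carrier_mat)

lemma dims_simps[simp]: "dim_row (Cm N \<epsilon>) = N*N" "dim_col (Cm N \<epsilon>) = N*N"
  "dim_row (Wm N U0) = N*N" "dim_col (Wm N U0) = N*N"
  "dim_row (Wp N U0) = N*N" "dim_col (Wp N U0) = N*N"
  "dim_row (Gm N \<epsilon> U0) = N*N" "dim_col (Gm N \<epsilon> U0) = N*N"
  by (meson carrier_matD Cm_carrier Wm_carrier Wp_carrier Gm_carrier)+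

lemma unitary_left: assumes "unitary_mat N U0" shows "mat_adjoint U0 * U0 = 1\<^sub>m N"
  using assms unfolding unitary_mat_def
  by (meson adj_carrier mat_mult_left_right_inverse)

lemma unitary_carrier: "unitary_mat N U0 \<Longrightarrow> U0 \<in> carrier_mat N N"
  unfolding unitary_mat_def by simp

lemma Uch_lin: assumes "unitary_mat N U0" shows "linear_on_mats N (Uch U0)"
proof -
  have U: "U0 \<in> carrier_mat N N" using unitary_carrier[OF assms] .
  have UH: "mat_adjoint U0 \<in> carrier_mat N N" using adj_carrier[OF U] .
  show ?thesis unfolding linear_on_mats_def Uch_def
  proof (intro conjI ballI allI)
    fix A :: "complex mat" assume "A \<in> carrier_mat N N"
    then show "U0 * A * mat_adjoint U0 \<in> carrier_mat N N" using U UH by auto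
  next
    fix A B :: "complex mat" assume A: "A \<in> carrier_mat N N" and B: "B \<in> carrier_mat N N"
    have "U0 * (A + B) = U0 * A + U0 * B" using mult_add_distrib_mat[OF U A B] .
    moreover have "(U0 * A + U0 * B) * mat_adjoint U0 = U0 * A * mat_adjoint U0 + U0 * B * mat_adjoint U0"
      using add_mult_distrib_mat[of "U0 * A" N N "U0 * B" "mat_adjoint U0" N] U A B UH by auto
    ultimately show "U0 * (A + B) * mat_adjoint U0 = U0 * A * mat_adjoint U0 + U0 * B * mat_adjoint U0" by simp
  next
    fix a and A :: "complex mat" assume A: "A \<in> carrier_mat N N"
    have "U0 * (a \<cdot>\<^sub>m A) = a \<cdot>\<^sub>m (U0 * A)" using mult_smult_distrib[OF U A] .
    moreover have "(a \<cdot>\<^sub>m (U0 * A)) * mat_adjoint U0 = a \<cdot>\<^sub>m (U0 * A * mat_adjoint U0)"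
      using mult_smult_assoc_mat[of "U0 * A" N N "mat_adjoint U0" N] U A UH by auto
    ultimately show "U0 * (a \<cdot>\<^sub>m A) * mat_adjoint U0 = a \<cdot>\<^sub>m (U0 * A * mat_adjoint U0)" by simp
  qed
qed

lemma unit_conj: assumes U: "U \<in> carrier_mat N N" and "i < N" "j < N" "a < N" "b < N"
  shows "(U * mat_unit N a b * mat_adjoint U) $$ (i,j) = U $$ (i,a) * cnj (U $$ (j,b))"
proof -
  have UE: "U * mat_unit N a b \<in> carrier_mat N N" using U by simp
  have e1: "(U * mat_unit N a b) $$ (i,m) = (if m = b then U $$ (i,a) else 0)" if "m < N" for m
  proof -
    have "(U * mat_unit N a b) $$ (i,m) = (\<Sum>r<N. U $$ (i,r) * mat_unit N a b $$ (r,m))"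
      using mult_entry[OF U mat_unit_carrier \<open>i < N\<close> that] .
    also have "\<dots> = (\<Sum>r<N. if r = a then (if m = b then U $$ (i,a) else 0) else 0)"
      using that by (intro sum.cong refl) (auto simp: mat_unit_def)
    also have "\<dots> = (if m = b then U $$ (i,a) else 0)" using assms by (simp add: sum.delta)
    finally show ?thesis .
  qed
  have "(U * mat_unit N a b * mat_adjoint U) $$ (i,j) = (\<Sum>m<N. (U * mat_unit N a b) $$ (i,m) * mat_adjoint U $$ (m,j))"
    using mult_entry[OF UE adj_carrier[OF U] \<open>i < N\<close> \<open>j < N\<close>] .
  also have "\<dots> = (\<Sum>m<N. if m = b then U $$ (i,a) * cnj (U $$ (j,b)) else 0)"
    using assms by (intro sum.cong refl) (auto simp: e1 adj_index[OF U])
  also have "\<dots> = U $$ (i,a) * cnj (U $$ (j,b))" using assms by (simp add: sum.delta)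
  finally show ?thesis .
qed

lemma Wm_index: assumes U: "U0 \<in> carrier_mat N N" and k: "k < N*N" and l: "l < N*N"
  shows "Wm N U0 $$ (k,l) = U0 $$ (k div N, l div N) * cnj (U0 $$ (k mod N, l mod N))"
  unfolding Wm_def rep_map_index[OF k l] Uch_def
  using unit_conj[OF U divN[OF k] modN[OF k] divN[OF l] modN[OF l]] .

lemma colU_orth: assumes "unitary_mat N U0" "a < N" "a' < N"
  shows "(\<Sum>i<N. cnj (U0 $$ (i,a)) * U0 $$ (i,a')) = (if a = a' then 1 else 0)"
proof -
  have U: "U0 \<in> carrier_mat N N" using unitary_carrier[OF assms(1)] .
  have "(mat_adjoint U0 * U0) $$ (a,a') = (\<Sum>i<N. cnj (U0 $$ (i,a)) * U0 $$ (i,a'))"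
    using assms by (subst mult_entry[OF adj_carrier[OF U] U]) (auto simp: adj_index[OF U])
  then show ?thesis using unitary_left[OF assms(1)] assms by simp
qed

lemma Wm_unitary: assumes "unitary_mat N U0" shows "mat_adjoint (Wm N U0) * Wm N U0 = 1\<^sub>m (N*N)"
proof (rule eq_matI)
  have U: "U0 \<in> carrier_mat N N" using unitary_carrier[OF assms(1)] .
  fix l l' assume "l < dim_row (1\<^sub>m (N*N))" "l' < dim_col (1\<^sub>m (N*N))"
  then have l: "l < N*N" and l': "l' < N*N" by auto
  have "(mat_adjoint (Wm N U0) * Wm N U0) $$ (l,l') = (\<Sum>k<N*N. cnj (Wm N U0 $$ (k,l)) * Wm N U0 $$ (k,l'))"
    using l l' by (subst mult_entry[OF adj_carrier[OF Wm_carrier] Wm_carrier]) (auto simp: adj_index[OF Wm_carrier])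
  also have "\<dots> = (\<Sum>k<N*N. (cnj (U0 $$ (k div N, l div N)) * U0 $$ (k div N, l' div N)) *
        cnj (cnj (U0 $$ (k mod N, l mod N)) * U0 $$ (k mod N, l' mod N)))"
    using l l' by (intro sum.cong refl) (simp add: Wm_index[OF U] algebra_simps)
  also have "\<dots> = (\<Sum>i<N. \<Sum>j<N. (cnj (U0 $$ (i, l div N)) * U0 $$ (i, l' div N)) *
        cnj (cnj (U0 $$ (j, l mod N)) * U0 $$ (j, l' mod N)))"
    by (rule sum_pairs)
  also have "\<dots> = (\<Sum>i<N. cnj (U0 $$ (i, l div N)) * U0 $$ (i, l' div N)) *
       cnj (\<Sum>j<N. cnj (U0 $$ (j, l mod N)) * U0 $$ (j, l' mod N))"
    by (simp add: sum_product cnj_sum)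
  also have "\<dots> = (if l = l' then 1 else 0)"
    using colU_orth[OF assms divN[OF l] divN[OF l']] colU_orth[OF assms modN[OF l] modN[OF l']]
    by (auto simp: idx_eq[of l l' N])
  finally show "(mat_adjoint (Wm N U0) * Wm N U0) $$ (l,l') = 1\<^sub>m (N*N) $$ (l,l')" using l l' by simp
qed auto

lemma Wm_one: assumes "unitary_mat N U0" shows "Wm N U0 *\<^sub>v vm N (1\<^sub>m N) = vm N (1\<^sub>m N)"
proof -
  have U: "U0 \<in> carrier_mat N N" using unitary_carrier[OF assms(1)] .
  have "Uch U0 (1\<^sub>m N) = 1\<^sub>m N" unfolding Uch_def using right_mult_one_mat[OF U] assms unfolding unitary_mat_def by simp
  then show ?thesis unfolding Wm_def using rep_map_vec[OF Uch_lin[OF assms] one_carrier_mat] by simp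
qed


lemma adj_mult: fixes A B :: "complex mat" assumes A: "A \<in> carrier_mat n m" and B: "B \<in> carrier_mat m k"
  shows "mat_adjoint (A * B) = mat_adjoint B * mat_adjoint A"
proof (rule eq_matI)
  fix i j assume "i < dim_row (mat_adjoint B * mat_adjoint A)" "j < dim_col (mat_adjoint B * mat_adjoint A)"
  then have i: "i < k" and j: "j < n" using A B by auto
  have AB: "A * B \<in> carrier_mat n k" using A B by simp
  have "mat_adjoint (A * B) $$ (i,j) = cnj ((A * B) $$ (j,i))" using adj_index[OF AB i j] .
  also have "\<dots> = (\<Sum>l<m. cnj (A $$ (j,l)) * cnj (B $$ (l,i)))"
    using mult_entry[OF A B j i] by (simp add: cnj_sum)
  also have "\<dots> = (mat_adjoint B * mat_adjoint A) $$ (i,j)"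
    using i j by (subst mult_entry[OF adj_carrier[OF B] adj_carrier[OF A]])
      (auto simp: adj_index[OF A] adj_index[OF B] mult.commute)
  finally show "mat_adjoint (A * B) $$ (i,j) = (mat_adjoint B * mat_adjoint A) $$ (i,j)" .
qed (use A B in auto)

lemma adj_adj: assumes A: "A \<in> carrier_mat n m" shows "mat_adjoint (mat_adjoint A) = (A :: complex mat)"
  by (rule eq_matI) (use A in \<open>auto simp: adj_index[OF adj_carrier[OF A]] adj_index[OF A]\<close>)

lemma prod_list_upt: "prod_list (map f [0..<n]) = (\<Prod>i<n. f i)"
  by (induction n) (auto simp: lessThan_Suc ac_simps)

lemma cmod_sq: "complex_of_real ((cmod z)\<^sup>2) = cnj z * z"
  by (subst complex_norm_square) (rule mult.commute)

lemma cmod_sq': "(complex_of_real (cmod z))\<^sup>2 = cnj z * z"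
  using cmod_sq[of z] by (simp only: of_real_power)

lemma unitary_norm: assumes A: "A \<in> carrier_mat n n" and Au: "mat_adjoint A * A = 1\<^sub>m n"
  and y: "y \<in> carrier_vec n"
  shows "(\<Sum>i<n. (cmod ((A *\<^sub>v y) $ i))\<^sup>2) = (\<Sum>i<n. (cmod (y $ i))\<^sup>2)"
proof -
  have orth: "(\<Sum>i<n. cnj (A $$ (i,j)) * A $$ (i,k)) = (if j = k then 1 else 0)" if "j < n" "k < n" for j k
  proof -
    have "(mat_adjoint A * A) $$ (j,k) = (\<Sum>i<n. cnj (A $$ (i,j)) * A $$ (i,k))"
      using that by (subst mult_entry[OF adj_carrier[OF A] A]) (auto simp: adj_index[OF A])
    then show ?thesis using Au that by simp
  qed
  have "complex_of_real (\<Sum>i<n. (cmod ((A *\<^sub>v y) $ i))\<^sup>2) = (\<Sum>i<n. cnj ((A *\<^sub>v y) $ i) * (A *\<^sub>v y) $ i)"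
    by (simp add: cmod_sq')
  also have "\<dots> = (\<Sum>i<n. \<Sum>j<n. \<Sum>k<n. cnj (y $ j) * y $ k * (cnj (A $$ (i,j)) * A $$ (i,k)))"
    apply (intro sum.cong refl)
    apply (simp add: mv_entry[OF A y] cnj_sum sum_product algebra_simps)
    apply (rule sum.swap)
    done
  also have "\<dots> = (\<Sum>j<n. \<Sum>i<n. \<Sum>k<n. cnj (y $ j) * y $ k * (cnj (A $$ (i,j)) * A $$ (i,k)))"
    by (rule sum.swap)
  also have "\<dots> = (\<Sum>j<n. \<Sum>k<n. \<Sum>i<n. cnj (y $ j) * y $ k * (cnj (A $$ (i,j)) * A $$ (i,k)))"
    by (rule sum.cong[OF refl], rule sum.swap)
  also have "\<dots> = (\<Sum>j<n. \<Sum>k<n. cnj (y $ j) * y $ k * (if j = k then 1 else 0))"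
    by (intro sum.cong refl) (simp add: sum_distrib_left[symmetric] orth)
  also have "\<dots> = (\<Sum>j<n. cnj (y $ j) * y $ j)"
  proof (rule sum.cong[OF refl])
    fix j assume j: "j \<in> {..<n}"
    have "\<And>k. cnj (y $ j) * y $ k * (if j = k then 1 else 0) = (if j = k then cnj (y $ j) * y $ k else 0)"
      by simp
    then show "(\<Sum>k<n. cnj (y $ j) * y $ k * (if j = k then 1 else 0)) = cnj (y $ j) * y $ j"
      using j by (simp only: sum.delta finite_lessThan) simp
  qed
  also have "\<dots> = complex_of_real (\<Sum>i<n. (cmod (y $ i))\<^sup>2)"
    by (simp add: cmod_sq')
  finally show ?thesis by (simp only: of_real_eq_iff)
qed

lemma nsq_pos: assumes "y \<in> carrier_vec n" "y \<noteq> 0\<^sub>v n" shows "(\<Sum>i<n. (cmod (y $ i))\<^sup>2) > 0"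
proof -
  obtain i where i: "i < n" "y $ i \<noteq> 0" using assms by (metis eq_vecI carrier_vecD index_zero_vec)
  have "(cmod (y $ i))\<^sup>2 \<le> (\<Sum>i<n. (cmod (y $ i))\<^sup>2)"
    using i by (intro member_le_sum) auto
  moreover have "(cmod (y $ i))\<^sup>2 > 0" using i by simp
  ultimately show ?thesis by linarith
qed

locale Gsetup =
  fixes n :: nat and c :: "nat \<Rightarrow> real" and W G :: "complex mat"
  assumes n: "n > 0"
    and W: "W \<in> carrier_mat n n" and Wu: "mat_adjoint W * W = 1\<^sub>m n"
    and W0: "\<forall>i<n. W $$ (i,0) = (if i = 0 then 1 else 0)"
    and G: "G \<in> carrier_mat n n"
    and Gdef: "\<forall>i<n. \<forall>j<n. G $$ (i,j) = complex_of_real (c i) * W $$ (i,j)"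
    and c0: "c 0 = 1" and cnn: "\<forall>i<n. c i \<ge> 0"
begin

lemma Wrow0: assumes "j < n" shows "W $$ (0,j) = (if j = 0 then 1 else 0)"
proof -
  have "(mat_adjoint W * W) $$ (0,j) = (\<Sum>i<n. cnj (W $$ (i,0)) * W $$ (i,j))"
    using assms n by (subst mult_entry[OF adj_carrier[OF W] W]) (auto simp: adj_index[OF W])
  also have "\<dots> = (\<Sum>i<n. if i = 0 then W $$ (0,j) else 0)"
    using W0 by (intro sum.cong refl) auto
  also have "\<dots> = W $$ (0,j)" using n by (simp add: sum.delta)
  finally show ?thesis using Wu assms n by simp
qed

lemma Gy: assumes y: "y \<in> carrier_vec n" and i: "i < n"
  shows "(G *\<^sub>v y) $ i = complex_of_real (c i) * (W *\<^sub>v y) $ i"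
  using i by (simp add: mv_entry[OF G y i] mv_entry[OF W y i] Gdef sum_distrib_left algebra_simps)

lemma Wy0: assumes y: "y \<in> carrier_vec n" shows "(W *\<^sub>v y) $ 0 = y $ 0"
proof -
  have "(W *\<^sub>v y) $ 0 = (\<Sum>j<n. W $$ (0,j) * y $ j)" using mv_entry[OF W y n] .
  also have "\<dots> = (\<Sum>j<n. if j = 0 then y $ 0 else 0)" by (intro sum.cong refl) (auto simp: Wrow0)
  finally show ?thesis using n by (simp add: sum.delta)
qed

lemma eig_sq: assumes y: "y \<in> carrier_vec n" and ev: "G *\<^sub>v y = lam \<cdot>\<^sub>v y"
  shows "(cmod lam)\<^sup>2 * (\<Sum>i<n. (cmod (y $ i))\<^sup>2) = (\<Sum>i<n. (c i)\<^sup>2 * (cmod ((W *\<^sub>v y) $ i))\<^sup>2)"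
proof -
  have "(cmod lam)\<^sup>2 * (\<Sum>i<n. (cmod (y $ i))\<^sup>2) = (\<Sum>i<n. (cmod ((G *\<^sub>v y) $ i))\<^sup>2)"
    unfolding ev sum_distrib_left using y by (intro sum.cong refl) (simp add: norm_mult power_mult_distrib)
  also have "\<dots> = (\<Sum>i<n. (c i)\<^sup>2 * (cmod ((W *\<^sub>v y) $ i))\<^sup>2)"
    using y cnn by (intro sum.cong refl) (simp add: Gy norm_mult power_mult_distrib)
  finally show ?thesis .
qed

lemma eig_lower: assumes y: "y \<in> carrier_vec n" "y \<noteq> 0\<^sub>v n" and ev: "G *\<^sub>v y = lam \<cdot>\<^sub>v y"
  and cmin: "cmin \<ge> 0" "\<forall>i<n. c i \<ge> cmin"
  shows "cmin \<le> cmod lam"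
proof -
  let ?S = "\<Sum>i<n. (cmod (y $ i))\<^sup>2"
  have "cmin\<^sup>2 * ?S = cmin\<^sup>2 * (\<Sum>i<n. (cmod ((W *\<^sub>v y) $ i))\<^sup>2)"
    using unitary_norm[OF W Wu y(1)] by simp
  also have "\<dots> = (\<Sum>i<n. cmin\<^sup>2 * (cmod ((W *\<^sub>v y) $ i))\<^sup>2)"
    by (simp add: sum_distrib_left)
  also have "\<dots> \<le> (\<Sum>i<n. (c i)\<^sup>2 * (cmod ((W *\<^sub>v y) $ i))\<^sup>2)"
  proof (intro sum_mono)
    fix i assume "i \<in> {..<n}"
    then have "(c i) \<ge> cmin" using cmin by auto
    then have "cmin\<^sup>2 \<le> (c i)\<^sup>2" using cmin by (intro power_mono) auto
    then show "cmin\<^sup>2 * (cmod ((W *\<^sub>v y) $ i))\<^sup>2 \<le> (c i)\<^sup>2 * (cmod ((W *\<^sub>v y) $ i))\<^sup>2"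
      by (intro mult_right_mono) auto
  qed
  also have "\<dots> = (cmod lam)\<^sup>2 * ?S" using eig_sq[OF y(1) ev] by simp
  finally have "cmin\<^sup>2 \<le> (cmod lam)\<^sup>2" using nsq_pos[OF y] by simp
  then show ?thesis by (rule power2_le_imp_le) simp
qed

lemma eig_upper: assumes y: "y \<in> carrier_vec n" "y \<noteq> 0\<^sub>v n" and ev: "G *\<^sub>v y = lam \<cdot>\<^sub>v y"
  and y0: "y $ 0 = 0"
  and cmax: "cmax \<ge> 0" "\<forall>i<n. i \<noteq> 0 \<longrightarrow> c i \<le> cmax"
  shows "cmod lam \<le> cmax"
proof -
  let ?S = "\<Sum>i<n. (cmod (y $ i))\<^sup>2"
  have "(cmod lam)\<^sup>2 * ?S = (\<Sum>i<n. (c i)\<^sup>2 * (cmod ((W *\<^sub>v y) $ i))\<^sup>2)" using eig_sq[OF y(1) ev] .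
  also have "\<dots> \<le> (\<Sum>i<n. cmax\<^sup>2 * (cmod ((W *\<^sub>v y) $ i))\<^sup>2)"
  proof (intro sum_mono)
    fix i assume "i \<in> {..<n}"
    then show "(c i)\<^sup>2 * (cmod ((W *\<^sub>v y) $ i))\<^sup>2 \<le> cmax\<^sup>2 * (cmod ((W *\<^sub>v y) $ i))\<^sup>2"
    proof (cases "i = 0")
      case True
      then show ?thesis using Wy0[OF y(1)] y0 by simp
    next
      case False
      then have "c i \<le> cmax" "0 \<le> c i" using cmax cnn \<open>i \<in> {..<n}\<close> by auto
      then have "(c i)\<^sup>2 \<le> cmax\<^sup>2" by (intro power_mono) auto
      then show ?thesis by (intro mult_right_mono) auto
    qed
  qed
  also have "\<dots> = cmax\<^sup>2 * (\<Sum>i<n. (cmod ((W *\<^sub>v y) $ i))\<^sup>2)"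
    by (simp add: sum_distrib_left)
  also have "\<dots> = cmax\<^sup>2 * ?S"
    using unitary_norm[OF W Wu y(1)] by simp
  finally have "(cmod lam)\<^sup>2 \<le> cmax\<^sup>2" using nsq_pos[OF y] by simp
  then show ?thesis by (rule power2_le_imp_le) (use cmax in simp)
qed

lemma eig_y0: assumes y: "y \<in> carrier_vec n" and ev: "G *\<^sub>v y = lam \<cdot>\<^sub>v y" and lam: "lam \<noteq> 1"
  shows "y $ 0 = 0"
proof -
  have "(G *\<^sub>v y) $ 0 = y $ 0" using Gy[OF y n] Wy0[OF y] c0 by simp
  then have "lam * y $ 0 = y $ 0" using ev y n by simp
  then have "(lam - 1) * y $ 0 = 0" by (simp add: algebra_simps)
  then show ?thesis using lam by simp
qed

end


context Gsetup
begin

lemma order_one: assumes cmax: "cmax < 1" "cmax \<ge> 0" "\<forall>i<n. i \<noteq> 0 \<longrightarrow> c i \<le> cmax"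
  shows "order 1 (char_poly G) = 1"
proof -
  obtain m where nm: "n = Suc m" using n by (cases n) auto
  obtain A1 A2 A3 A4 where sb: "split_block G 1 1 = (A1,A2,A3,A4)" by (metis prod_cases4)
  have dG: "dim_row G = 1 + m" "dim_col G = 1 + m" using G nm by auto
  note spl = split_block[OF sb dG]
  have A1: "A1 = mat 1 1 (\<lambda>ij. G $$ ij)" and A3: "A3 = mat m 1 (\<lambda>(i,j). G $$ (i+1, j))"
    and A4: "A4 = mat m m (\<lambda>(i,j). G $$ (i+1, j+1))"
    using sb dG unfolding split_block_def Let_def by auto
  have G00: "G $$ (0,0) = 1" using Gdef W0 c0 n by auto
  have A3z: "A3 = 0\<^sub>m m 1"
    unfolding A3 by (rule eq_matI) (use Gdef W0 nm in auto)
  have cp: "char_poly G = char_poly A1 * char_poly A4"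
    using char_poly_four_block_zeros_col[OF spl(1,2,4)] spl(5) A3z by simp
  have ut: "upper_triangular A1" unfolding upper_triangular_def A1 by simp
  have cp1: "char_poly A1 = [:-1, 1:]"
    using char_poly_upper_triangular[OF spl(1) ut] G00 unfolding A1 diag_mat_def by simp
  have nz4: "char_poly A4 \<noteq> 0"
    using degree_monic_char_poly[OF spl(4)] by (metis coeff_0 zero_neq_one)
  have "poly (char_poly A4) 1 \<noteq> 0"
  proof
    assume "poly (char_poly A4) 1 = 0"
    then have "eigenvalue A4 1" using eigenvalue_root_char_poly[OF spl(4)] by simp
    then obtain v where "eigenvector A4 v 1" unfolding eigenvalue_def by auto
    then have v: "v \<in> carrier_vec m" "v \<noteq> 0\<^sub>v m" "A4 *\<^sub>v v = v"
      unfolding eigenvector_def using spl(4) by auto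
    define y where "y = vec n (\<lambda>i. if i = 0 then 0 else v $ (i - 1))"
    have y: "y \<in> carrier_vec n" unfolding y_def by simp
    have y0: "y $ 0 = 0" unfolding y_def using n by simp
    have ynz: "y \<noteq> 0\<^sub>v n"
    proof
      assume "y = 0\<^sub>v n"
      then have "v $ k = 0" if "k < m" for k
      proof -
        have "y $ Suc k = 0" using \<open>y = 0\<^sub>v n\<close> nm that by simp
        moreover have "y $ Suc k = v $ k" unfolding y_def using nm that by simp
        ultimately show ?thesis by simp
      qed
      then have "v = 0\<^sub>v m" using v(1) by (intro eq_vecI) auto
      then show False using v(2) by simp
    qed
    have "G *\<^sub>v y = 1 \<cdot>\<^sub>v y"
    proof (rule eq_vecI)
      fix i assume "i < dim_vec (1 \<cdot>\<^sub>v y)"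
      then have i: "i < n" using y by simp
      have "(G *\<^sub>v y) $ i = (\<Sum>j<n. G $$ (i,j) * y $ j)" using mv_entry[OF G y i] .
      also have "\<dots> = G $$ (i,0) * y $ 0 + (\<Sum>j<m. G $$ (i, Suc j) * y $ Suc j)"
        unfolding nm by (rule sum.lessThan_Suc_shift)
      also have "\<dots> = (\<Sum>j<m. G $$ (i, Suc j) * v $ j)"
        using y0 unfolding y_def nm by simp
      also have "\<dots> = y $ i"
      proof (cases i)
        case 0
        have "G $$ (0, Suc j) = 0" if "j < m" for j using Gdef Wrow0 nm that by auto
        then show ?thesis using 0 y0 by simp
      next
        case (Suc i')
        then have i': "i' < m" using i nm by simp
        have "(\<Sum>j<m. G $$ (i, Suc j) * v $ j) = (A4 *\<^sub>v v) $ i'"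
          using mv_entry[OF spl(4) v(1) i'] Suc i' unfolding A4 by simp
        then show ?thesis using v(3) Suc unfolding y_def using i by simp
      qed
      finally show "(G *\<^sub>v y) $ i = (1 \<cdot>\<^sub>v y) $ i" using i y by simp
    qed (use G y in auto)
    then have "cmod 1 \<le> cmax" using eig_upper[OF y ynz _ y0 cmax(2,3)] by blast
    then show False using cmax(1) by simp
  qed
  then have o4: "order 1 (char_poly A4) = 0" using order_root nz4 by blast
  have "[:-1, 1:] * char_poly A4 \<noteq> 0" by (metis mult_eq_0_iff pCons_eq_0_iff one_neq_zero nz4)
  then have "order 1 (char_poly G) = order 1 [:-1, 1::complex:] + order 1 (char_poly A4)"
    unfolding cp cp1 using order_mult[of "[:-1, 1:]" "char_poly A4" 1] by blast
  then show ?thesis using o4 order_linear[of "1::complex"] by simp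
qed

lemma charpoly_GHG: "char_poly (mat_adjoint G * G) = (\<Prod>i<n. [:- complex_of_real ((c i)\<^sup>2), 1:])"
proof -
  define C2 where "C2 = mat n n (\<lambda>(i,j). if i = j then complex_of_real ((c i)\<^sup>2) else 0)"
  have C2: "C2 \<in> carrier_mat n n" unfolding C2_def by simp
  have WH: "mat_adjoint W \<in> carrier_mat n n" using adj_carrier[OF W] .
  have Wu': "W * mat_adjoint W = 1\<^sub>m n" using mat_mult_left_right_inverse[OF WH W Wu] .
  have AG: "mat_adjoint G * G \<in> carrier_mat n n" using adj_carrier[OF G] G by (rule mult_carrier_mat)
  have WC2W: "mat_adjoint W * C2 * W \<in> carrier_mat n n" using mult_carrier_mat[OF mult_carrier_mat[OF WH C2] W] .
  have eq: "mat_adjoint G * G = mat_adjoint W * C2 * W"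
  proof (rule eq_matI)
    fix j k assume "j < dim_row (mat_adjoint W * C2 * W)" "k < dim_col (mat_adjoint W * C2 * W)"
    then have j: "j < n" and k: "k < n" using WC2W by auto
    have WC: "mat_adjoint W * C2 \<in> carrier_mat n n" using WH C2 by simp
    have e1: "(mat_adjoint W * C2) $$ (j,i) = cnj (W $$ (i,j)) * complex_of_real ((c i)\<^sup>2)" if "i < n" for i
    proof -
      have "(mat_adjoint W * C2) $$ (j,i) = (\<Sum>l<n. mat_adjoint W $$ (j,l) * C2 $$ (l,i))"
        using mult_entry[OF WH C2 j that] .
      also have "\<dots> = (\<Sum>l<n. if l = i then cnj (W $$ (i,j)) * complex_of_real ((c i)\<^sup>2) else 0)"
        using j that by (intro sum.cong refl) (auto simp: C2_def adj_index[OF W])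
      finally show ?thesis using that by (simp add: sum.delta)
    qed
    have "(mat_adjoint G * G) $$ (j,k) = (\<Sum>i<n. cnj (G $$ (i,j)) * G $$ (i,k))"
      using j k by (subst mult_entry[OF adj_carrier[OF G] G]) (auto simp: adj_index[OF G])
    also have "\<dots> = (\<Sum>i<n. cnj (W $$ (i,j)) * complex_of_real ((c i)\<^sup>2) * W $$ (i,k))"
      using j k Gdef by (intro sum.cong refl) (auto simp: power2_eq_square)
    also have "\<dots> = (mat_adjoint W * C2 * W) $$ (j,k)"
      using j k by (subst mult_entry[OF WC W]) (auto simp: e1)
    finally show "(mat_adjoint G * G) $$ (j,k) = (mat_adjoint W * C2 * W) $$ (j,k)" .
  qed (metis AG WC2W carrier_matD(1), metis AG WC2W carrier_matD(2))
  have "similar_mat (mat_adjoint G * G) C2"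
    unfolding similar_mat_def
    by (rule exI[of _ "mat_adjoint W"], rule exI[of _ W], rule similar_mat_witI[OF Wu Wu' eq AG C2 WH W])
  then have "char_poly (mat_adjoint G * G) = char_poly C2" by (rule char_poly_similar)
  also have "\<dots> = (\<Prod>a\<leftarrow>diag_mat C2. [:- a, 1:])"
    by (rule char_poly_upper_triangular[OF C2]) (simp add: upper_triangular_def C2_def)
  also have "\<dots> = (\<Prod>i<n. [:- complex_of_real ((c i)\<^sup>2), 1:])"
  proof -
    have "map (\<lambda>a. [:- a, 1:]) (diag_mat C2) = map (\<lambda>i. [:- complex_of_real ((c i)\<^sup>2), 1:]) [0..<n]"
      unfolding diag_mat_def map_map using C2 by (intro map_cong) (auto simp: C2_def)
    then show ?thesis using prod_list_upt[of "\<lambda>i. [:- complex_of_real ((c i)\<^sup>2), 1:]" n] by simp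
  qed
  finally show ?thesis .
qed

end

lemma sin_ge: assumes N: "N \<ge> 2" and mu: "0 < \<mu>" "\<mu> < N"
  shows "sin (pi / real N) \<le> sin (pi * real \<mu> / real N)"
proof -
  have Np: "real N > 0" using N by simp
  have a: "pi / real N \<le> pi / 2" using N by (intro divide_left_mono) auto
  have a0: "- (pi / 2) \<le> pi / real N" using Np pi_gt_zero by (smt (verit) divide_nonneg_pos)
  show ?thesis
  proof (cases "pi * real \<mu> / real N \<le> pi / 2")
    case True
    have "pi / real N \<le> pi * real \<mu> / real N" using mu Np by (simp add: divide_right_mono)
    then show ?thesis using True a0 by (intro sin_monotone_2pi_le) auto
  next
    case False
    have eq: "sin (pi * real \<mu> / real N) = sin (pi * real (N - \<mu>) / real N)"
    proof -
      have "pi * real (N - \<mu>) / real N = pi - pi * real \<mu> / real N"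
        using mu Np by (simp add: of_nat_diff field_simps)
      then show ?thesis by simp
    qed
    have "pi / real N \<le> pi * real (N - \<mu>) / real N" using mu Np by (simp add: divide_right_mono)
    moreover have "pi * real (N - \<mu>) / real N \<le> pi / 2"
    proof -
      have "pi * real (N - \<mu>) / real N = pi - pi * real \<mu> / real N"
        using mu Np by (simp add: of_nat_diff field_simps)
      then show ?thesis using False by simp
    qed
    ultimately show ?thesis unfolding eq using a
      using a0 by (intro sin_monotone_2pi_le) auto
  qed
qed

lemma sin_pos: assumes "N \<ge> 2" shows "sin (pi / real N) > 0"
proof -
  have "pi / real N < pi" using assms by (simp add: divide_less_eq)
  then show ?thesis using assms by (intro sin_gt_zero) auto
qed

lemma sinsq_ge: assumes N: "N \<ge> 2" and mu: "\<mu> < N" "\<mu> \<noteq> 0"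
  shows "(sin (pi / real N))\<^sup>2 \<le> (sin (pi * real \<mu> / real N))\<^sup>2"
  using sin_ge[OF N _ mu(1)] mu sin_pos[OF N] by (intro power_mono) auto

lemma ctilde_upper: assumes N: "N \<ge> 2" and mu: "\<mu> < N" "\<nu> < N" "\<mu> \<noteq> 0 \<or> \<nu> \<noteq> 0"
  shows "ctilde N \<epsilon> \<mu> \<nu> \<le> exp (- (1/2) * (\<epsilon> * real N / pi)\<^sup>2 * (sin (pi / real N))\<^sup>2)"
proof -
  have "(sin (pi / real N))\<^sup>2 \<le> (sin (pi * real \<mu> / real N))\<^sup>2 + (sin (pi * real \<nu> / real N))\<^sup>2"
  proof (cases "\<mu> \<noteq> 0")
    case True
    then show ?thesis using sinsq_ge[OF N mu(1)] zero_le_power2[of "sin (pi * real \<nu> / real N)"] by linarith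
  next
    case False
    then have "\<nu> \<noteq> 0" using mu by simp
    then show ?thesis using sinsq_ge[OF N mu(2)] zero_le_power2[of "sin (pi * real \<mu> / real N)"] by linarith
  qed
  then have "(1/2) * (\<epsilon> * real N / pi)\<^sup>2 * (sin (pi / real N))\<^sup>2 \<le>
      (1/2) * (\<epsilon> * real N / pi)\<^sup>2 * ((sin (pi * real \<mu> / real N))\<^sup>2 + (sin (pi * real \<nu> / real N))\<^sup>2)"
    by (intro mult_left_mono) auto
  then show ?thesis unfolding ctilde_def by simp
qed

lemma ctilde_lower: "exp (- (\<epsilon> * real N / pi)\<^sup>2) \<le> ctilde N \<epsilon> \<mu> \<nu>"
proof -
  have "(sin (pi * real \<mu> / real N))\<^sup>2 + (sin (pi * real \<nu> / real N))\<^sup>2 \<le> 2"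
  proof -
    have s1: "(sin x)\<^sup>2 \<le> 1" for x :: real using sin_cos_squared_add[of x] zero_le_power2[of "cos x"] by linarith
    show ?thesis using s1[of "pi * real \<mu> / real N"] s1[of "pi * real \<nu> / real N"] by linarith
  qed
  then have "(1/2) * (\<epsilon> * real N / pi)\<^sup>2 * ((sin (pi * real \<mu> / real N))\<^sup>2 + (sin (pi * real \<nu> / real N))\<^sup>2)
      \<le> (1/2) * (\<epsilon> * real N / pi)\<^sup>2 * 2"
    by (intro mult_left_mono) auto
  then show ?thesis unfolding ctilde_def by simp
qed

lemma cmax_lt1: assumes N: "N \<ge> 2" and eps: "\<epsilon> > 0"
  shows "exp (- (1/2) * (\<epsilon> * real N / pi)\<^sup>2 * (sin (pi / real N))\<^sup>2) < 1"
proof -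
  have "(\<epsilon> * real N / pi)\<^sup>2 > 0" using N eps by simp
  moreover have "(sin (pi / real N))\<^sup>2 > 0" using sin_pos[OF N] by simp
  ultimately have "(1/2) * (\<epsilon> * real N / pi)\<^sup>2 * (sin (pi / real N))\<^sup>2 > 0" by simp
  then show ?thesis by simp
qed

lemma ctilde_00: "ctilde N \<epsilon> 0 0 = 1" unfolding ctilde_def by simp

lemma ctilde_nn: "ctilde N \<epsilon> \<mu> \<nu> \<ge> 0" unfolding ctilde_def by simp


lemma cancel_left: fixes A B X :: "complex mat" assumes "A * B = 1\<^sub>m n" "A \<in> carrier_mat n n" "B \<in> carrier_mat n n" "X \<in> carrier_mat n k"
  shows "A * (B * X) = X"
proof -
  have "A * (B * X) = A * B * X" using assoc_mult_mat[OF assms(2,3,4)] by simp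
  then show ?thesis using assms(1) left_mult_one_mat[OF assms(4)] by simp
qed

lemma vm_smult: "vm N (a \<cdot>\<^sub>m X) = a \<cdot>\<^sub>v vm N X" if "X \<in> carrier_mat N N"
  using that by (intro eq_vecI) (auto simp: divN modN)

lemma one_smult_mat': "(1::'a::semiring_1) \<cdot>\<^sub>m A = A"
  by (rule eq_matI) auto

lemma vm_zero: "vm N (0\<^sub>m N N) = 0\<^sub>v (N*N)"
  by (intro eq_vecI) (auto simp: divN modN)

context
  fixes N :: nat and \<epsilon> :: real and U0 :: "complex mat" and D L :: "complex mat \<Rightarrow> complex mat"
  assumes N2: "N \<ge> 2" and eps: "\<epsilon> > 0" and U0: "unitary_mat N U0" and Dlin: "linear_on_mats N D"
    and Dbasis: "\<forall>\<mu> < N. \<forall>\<nu> < N. D (transl N \<mu> \<nu>) = complex_of_real (ctilde N \<epsilon> \<mu> \<nu>) \<cdot>\<^sub>m transl N \<mu> \<nu>"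
    and Ldef: "\<forall>\<rho>. L \<rho> = D (U0 * \<rho> * mat_adjoint U0)"
begin

lemma Npos: "N > 0" using N2 by simp

lemma U0c: "U0 \<in> carrier_mat N N" using unitary_carrier[OF U0] .

lemma L_Uch: "L \<rho> = D (Uch U0 \<rho>)" using Ldef unfolding Uch_def by simp

lemma Llin: "linear_on_mats N L"
proof -
  note U = Uch_lin[OF U0]
  show ?thesis unfolding linear_on_mats_def L_Uch
  proof (intro conjI ballI allI)
    fix A :: "complex mat" assume A: "A \<in> carrier_mat N N"
    show "D (Uch U0 A) \<in> carrier_mat N N" using lin_carrier[OF Dlin lin_carrier[OF U A]] .
  next
    fix A B :: "complex mat" assume A: "A \<in> carrier_mat N N" and B: "B \<in> carrier_mat N N"
    show "D (Uch U0 (A + B)) = D (Uch U0 A) + D (Uch U0 B)"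
      using lin_add[OF U A B] lin_add[OF Dlin lin_carrier[OF U A] lin_carrier[OF U B]] by simp
  next
    fix a and A :: "complex mat" assume A: "A \<in> carrier_mat N N"
    show "D (Uch U0 (a \<cdot>\<^sub>m A)) = a \<cdot>\<^sub>m D (Uch U0 A)"
      using lin_smult[OF U A] lin_smult[OF Dlin lin_carrier[OF U A]] by simp
  qed
qed

lemma repD: "rep_map N D = Fm N * Cm N \<epsilon> * mat_adjoint (Fm N)"
proof -
  have RF: "rep_map N D * Fm N = Fm N * Cm N \<epsilon>"
  proof (rule eq_matI)
    fix k l assume "k < dim_row (Fm N * Cm N \<epsilon>)" "l < dim_col (Fm N * Cm N \<epsilon>)"
    then have k: "k < N*N" and l: "l < N*N" by auto
    have "D (tv N l) = complex_of_real (ctilde N \<epsilon> (l div N) (l mod N)) \<cdot>\<^sub>m tv N l"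
      unfolding tv_def using Dbasis divN[OF l] modN[OF l] by auto
    then have lhs: "(rep_map N D * Fm N) $$ (k,l) = complex_of_real (ctilde N \<epsilon> (l div N) (l mod N)) * tv N l $$ (k div N, k mod N) / sq N"
      using repF[OF Dlin k l] divN[OF k] modN[OF k] by (simp add: tv_def)
    have "(Fm N * Cm N \<epsilon>) $$ (k,l) = (\<Sum>m<N*N. Fm N $$ (k,m) * Cm N \<epsilon> $$ (m,l))"
      using mult_entry[OF Fm_carrier Cm_carrier k l] .
    also have "\<dots> = (\<Sum>m<N*N. if m = l then Fm N $$ (k,l) * complex_of_real (ctilde N \<epsilon> (l div N) (l mod N)) else 0)"
      using l by (intro sum.cong refl) (auto simp: Cm_def)
    also have "\<dots> = Fm N $$ (k,l) * complex_of_real (ctilde N \<epsilon> (l div N) (l mod N))"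
      using l by (simp add: sum.delta)
    finally show "(rep_map N D * Fm N) $$ (k,l) = (Fm N * Cm N \<epsilon>) $$ (k,l)"
      using lhs k l by (simp add: Fm_def)
  qed auto
  have "rep_map N D = rep_map N D * (Fm N * mat_adjoint (Fm N))"
    using Fm_unitary'[OF Npos] by simp
  also have "\<dots> = rep_map N D * Fm N * mat_adjoint (Fm N)"
    using assoc_mult_mat[OF rep_map_carrier Fm_carrier adj_carrier[OF Fm_carrier]] by simp
  finally show ?thesis using RF by simp
qed

lemma repL: "rep_map N L = rep_map N D * Wm N U0"
proof (rule eq_matI)
  fix k l assume "k < dim_row (rep_map N D * Wm N U0)" "l < dim_col (rep_map N D * Wm N U0)"
  then have k: "k < N*N" and l: "l < N*N" by auto
  let ?E = "mat_unit N (l div N) (l mod N)"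
  have UE: "Uch U0 ?E \<in> carrier_mat N N" using lin_carrier[OF Uch_lin[OF U0] mat_unit_carrier] .
  have "rep_map N L $$ (k,l) = D (Uch U0 ?E) $$ (k div N, k mod N)"
    using rep_map_index[OF k l] L_Uch by simp
  also have "\<dots> = vm N (D (Uch U0 ?E)) $ k" using k by simp
  also have "\<dots> = (rep_map N D *\<^sub>v vm N (Uch U0 ?E)) $ k" using rep_map_vec[OF Dlin UE] by simp
  also have "\<dots> = (\<Sum>m<N*N. rep_map N D $$ (k,m) * vm N (Uch U0 ?E) $ m)"
    using mv_entry[OF rep_map_carrier vm_carrier k] .
  also have "\<dots> = (\<Sum>m<N*N. rep_map N D $$ (k,m) * Wm N U0 $$ (m,l))"
    using l by (intro sum.cong refl) (simp add: Wm_def rep_map_index)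
  also have "\<dots> = (rep_map N D * Wm N U0) $$ (k,l)"
    using mult_entry[OF rep_map_carrier Wm_carrier k l] by simp
  finally show "rep_map N L $$ (k,l) = (rep_map N D * Wm N U0) $$ (k,l)" .
qed auto

lemma FH_c: "mat_adjoint (Fm N) \<in> carrier_mat (N*N) (N*N)" using adj_carrier[OF Fm_carrier] .

lemma M_eq: "rep_map N L = Fm N * Gm N \<epsilon> U0 * mat_adjoint (Fm N)"
proof -
  let ?F = "Fm N" and ?H = "mat_adjoint (Fm N)" and ?C = "Cm N \<epsilon>" and ?W = "Wm N U0"
  note F = Fm_carrier[of N] and H = FH_c and C = Cm_carrier[of N \<epsilon>] and W = Wm_carrier[of N U0]
  have HW: "?H * ?W \<in> carrier_mat (N*N) (N*N)" using mult_carrier_mat[OF H W] .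
  have HWF: "?H * ?W * ?F \<in> carrier_mat (N*N) (N*N)" using mult_carrier_mat[OF HW F] .
  have CX: "?C * (?H * ?W * ?F) \<in> carrier_mat (N*N) (N*N)" using mult_carrier_mat[OF C HWF] .
  have FFH: "?F * ?H = 1\<^sub>m (N*N)" using Fm_unitary'[OF Npos] .
  have e1: "?H * ?W * ?F * ?H = ?H * ?W"
    using assoc_mult_mat[OF HW F H] FFH right_mult_one_mat[OF HW] by simp
  have "?F * Gm N \<epsilon> U0 * ?H = ?F * (?C * (?H * ?W * ?F) * ?H)"
    unfolding Gm_def Wp_def using assoc_mult_mat[OF F CX H] by simp
  also have "\<dots> = ?F * (?C * (?H * ?W))"
    using assoc_mult_mat[OF C HWF H] e1 by simp
  also have "\<dots> = ?F * ?C * ?H * ?W"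
    using assoc_mult_mat[OF F C mult_carrier_mat[OF H W]] assoc_mult_mat[OF mult_carrier_mat[OF F C] H W]
      assoc_mult_mat[OF C H W] by simp
  also have "\<dots> = rep_map N L" unfolding repL repD ..
  finally show ?thesis by simp
qed

lemma Wp_unitary: "mat_adjoint (Wp N U0) * Wp N U0 = 1\<^sub>m (N*N)"
proof -
  let ?F = "Fm N" and ?H = "mat_adjoint (Fm N)" and ?W = "Wm N U0" and ?WH = "mat_adjoint (Wm N U0)"
  note F = Fm_carrier[of N] and H = FH_c and W = Wm_carrier[of N U0] and WH = adj_carrier[OF Wm_carrier[of N U0]]
  have HW: "?H * ?W \<in> carrier_mat (N*N) (N*N)" using mult_carrier_mat[OF H W] .
  have WHF: "?WH * ?F \<in> carrier_mat (N*N) (N*N)" using mult_carrier_mat[OF WH F] .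
  have HWF: "?H * ?W * ?F \<in> carrier_mat (N*N) (N*N)" using mult_carrier_mat[OF HW F] .
  have WF: "?W * ?F \<in> carrier_mat (N*N) (N*N)" using mult_carrier_mat[OF W F] .
  have adj: "mat_adjoint (Wp N U0) = ?H * (?WH * ?F)"
    unfolding Wp_def adj_mult[OF HW F] adj_mult[OF H W] adj_adj[OF F]
    using assoc_mult_mat[OF H WH F] by simp
  have "?F * (?H * ?W * ?F) = ?W * ?F"
    using assoc_mult_mat[OF H W F] cancel_left[OF Fm_unitary'[OF Npos] F H WF] by simp
  then have "?WH * ?F * (?H * ?W * ?F) = ?F"
    using assoc_mult_mat[OF WH F HWF] cancel_left[OF Wm_unitary[OF U0] WH W F] by simp
  then have "?H * (?WH * ?F) * (?H * ?W * ?F) = ?H * ?F"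
    using assoc_mult_mat[OF H WHF HWF] by simp
  then show ?thesis unfolding adj using Fm_unitary[OF Npos] by (simp add: Wp_def)
qed

lemma Fe0: "Fm N *\<^sub>v unit_vec (N*N) 0 = (1 / sq N) \<cdot>\<^sub>v vm N (1\<^sub>m N)"
proof (rule eq_vecI)
  fix k assume "k < dim_vec ((1 / sq N) \<cdot>\<^sub>v vm N (1\<^sub>m N))"
  then have k: "k < N*N" by simp
  have n0: "0 < N*N" using Npos by simp
  have "(Fm N *\<^sub>v unit_vec (N*N) 0) $ k = (\<Sum>l<N*N. Fm N $$ (k,l) * unit_vec (N*N) 0 $ l)"
    using mv_entry[OF Fm_carrier _ k] by simp
  also have "\<dots> = (\<Sum>l<N*N. if l = 0 then Fm N $$ (k,0) else 0)"
    using n0 by (intro sum.cong refl) auto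
  also have "\<dots> = Fm N $$ (k,0)" using n0 by (simp add: sum.delta)
  also have "\<dots> = 1\<^sub>m N $$ (k div N, k mod N) / sq N"
    using k n0 by (simp add: Fm_def tv_def transl_00[OF Npos])
  finally show "(Fm N *\<^sub>v unit_vec (N*N) 0) $ k = ((1 / sq N) \<cdot>\<^sub>v vm N (1\<^sub>m N)) $ k"
    using k by simp
qed simp

lemma Wp_e0: "Wp N U0 *\<^sub>v unit_vec (N*N) 0 = unit_vec (N*N) 0"
proof -
  let ?F = "Fm N" and ?H = "mat_adjoint (Fm N)" and ?W = "Wm N U0" and ?e = "unit_vec (N*N) 0 :: complex vec"
  have e: "?e \<in> carrier_vec (N*N)" by simp
  have "Wp N U0 *\<^sub>v ?e = ?H *\<^sub>v (?W *\<^sub>v (?F *\<^sub>v ?e))"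
    unfolding Wp_def
    using assoc_mult_mat_vec[OF mult_carrier_mat[OF FH_c Wm_carrier] Fm_carrier e]
      assoc_mult_mat_vec[OF FH_c Wm_carrier mult_mat_vec_carrier[OF Fm_carrier e]] by simp
  also have "?W *\<^sub>v (?F *\<^sub>v ?e) = ?F *\<^sub>v ?e"
    unfolding Fe0 using mult_mat_vec[OF Wm_carrier vm_carrier] Wm_one[OF U0] by simp
  also have "?H *\<^sub>v (?F *\<^sub>v ?e) = (?H * ?F) *\<^sub>v ?e" using assoc_mult_mat_vec[OF FH_c Fm_carrier e] by simp
  also have "\<dots> = ?e" unfolding Fm_unitary[OF Npos] using e by simp
  finally show ?thesis .
qed

lemma Wp_col0: "\<forall>i<N*N. Wp N U0 $$ (i,0) = (if i = 0 then 1 else 0)"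
proof (intro allI impI)
  fix i assume i: "i < N*N"
  have n0: "0 < N*N" using Npos by simp
  have "Wp N U0 $$ (i,0) = (\<Sum>l<N*N. if l = 0 then Wp N U0 $$ (i,0) else 0)"
    using n0 by (simp add: sum.delta)
  also have "\<dots> = (\<Sum>l<N*N. Wp N U0 $$ (i,l) * unit_vec (N*N) 0 $ l)"
    using n0 by (intro sum.cong refl) auto
  also have "\<dots> = (Wp N U0 *\<^sub>v unit_vec (N*N) 0) $ i"
    using mv_entry[OF Wp_carrier _ i] by simp
  also have "\<dots> = (if i = 0 then 1 else 0)" unfolding Wp_e0 using i n0 by simp
  finally show "Wp N U0 $$ (i,0) = (if i = 0 then 1 else 0)" .
qed

lemma G_entries: "\<forall>i<N*N. \<forall>j<N*N. Gm N \<epsilon> U0 $$ (i,j) =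
   complex_of_real (ctilde N \<epsilon> (i div N) (i mod N)) * Wp N U0 $$ (i,j)"
proof (intro allI impI)
  fix i j assume i: "i < N*N" and j: "j < N*N"
  have "Gm N \<epsilon> U0 $$ (i,j) = (\<Sum>l<N*N. Cm N \<epsilon> $$ (i,l) * Wp N U0 $$ (l,j))"
    unfolding Gm_def using mult_entry[OF Cm_carrier Wp_carrier i j] .
  also have "\<dots> = (\<Sum>l<N*N. if l = i then complex_of_real (ctilde N \<epsilon> (i div N) (i mod N)) * Wp N U0 $$ (i,j) else 0)"
    using i by (intro sum.cong refl) (auto simp: Cm_def)
  finally show "Gm N \<epsilon> U0 $$ (i,j) = complex_of_real (ctilde N \<epsilon> (i div N) (i mod N)) * Wp N U0 $$ (i,j)"
    using i by (simp add: sum.delta)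
qed

lemma Gs: "Gsetup (N*N) (\<lambda>i. ctilde N \<epsilon> (i div N) (i mod N)) (Wp N U0) (Gm N \<epsilon> U0)"
  unfolding Gsetup_def using Npos Wp_unitary Wp_col0 G_entries by (simp add: ctilde_00 ctilde_nn)

lemma sim_M: "similar_mat (rep_map N L) (Gm N \<epsilon> U0)"
  unfolding similar_mat_def
  by (rule exI, rule exI, rule similar_mat_witI[OF Fm_unitary'[OF Npos] Fm_unitary[OF Npos] M_eq
        rep_map_carrier Gm_carrier Fm_carrier FH_c])

definition cmax :: real where "cmax = exp (- (1/2) * (\<epsilon> * real N / pi)\<^sup>2 * (sin (pi / real N))\<^sup>2)"

lemma c_le_cmax: "\<forall>i<N*N. i \<noteq> 0 \<longrightarrow> ctilde N \<epsilon> (i div N) (i mod N) \<le> cmax"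
proof (intro allI impI)
  fix i assume i: "i < N*N" "i \<noteq> 0"
  have "i div N \<noteq> 0 \<or> i mod N \<noteq> 0" using i(2) by (metis div_mult_mod_eq add_0 mult_0)
  then show "ctilde N \<epsilon> (i div N) (i mod N) \<le> cmax"
    unfolding cmax_def using ctilde_upper[OF N2 divN[OF i(1)] modN[OF i(1)]] by blast
qed

lemma alg1: "alg_mult N L 1 = 1"
proof -
  have "alg_mult N L 1 = order 1 (char_poly (Gm N \<epsilon> U0))"
    unfolding alg_mult_def using char_poly_similar[OF sim_M] by simp
  also have "\<dots> = 1"
    using Gsetup.order_one[OF Gs, of cmax] cmax_lt1[OF N2 eps] c_le_cmax unfolding cmax_def by simp
  finally show ?thesis .
qed

lemma eig_G: assumes "is_eigenvalue N L lam"
  shows "\<exists>y. y \<in> carrier_vec (N*N) \<and> y \<noteq> 0\<^sub>v (N*N) \<and> Gm N \<epsilon> U0 *\<^sub>v y = lam \<cdot>\<^sub>v y"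
proof -
  obtain X where X: "X \<in> carrier_mat N N" "X \<noteq> 0\<^sub>m N N" "L X = lam \<cdot>\<^sub>m X"
    using assms unfolding is_eigenvalue_def by auto
  let ?F = "Fm N" and ?H = "mat_adjoint (Fm N)" and ?M = "rep_map N L" and ?G = "Gm N \<epsilon> U0"
  let ?v = "vm N X"
  have Mv: "?M *\<^sub>v ?v = lam \<cdot>\<^sub>v ?v" using rep_map_vec[OF Llin X(1)] X(3) vm_smult[OF X(1)] by simp
  have GM: "?G = ?H * ?M * ?F"
  proof -
    note F = Fm_carrier[of N] and H = FH_c and G = Gm_carrier[of N \<epsilon> U0]
    have FG: "?F * ?G \<in> carrier_mat (N*N) (N*N)" using mult_carrier_mat[OF F G] .
    have FGH: "?F * ?G * ?H \<in> carrier_mat (N*N) (N*N)" using mult_carrier_mat[OF FG H] .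
    have "?M * ?F = ?F * ?G"
      unfolding M_eq using assoc_mult_mat[OF FG H F] Fm_unitary[OF Npos] right_mult_one_mat[OF FG] by simp
    then have "?H * ?M * ?F = ?H * (?F * ?G)" using assoc_mult_mat[OF H rep_map_carrier F] by simp
    also have "\<dots> = ?G" using cancel_left[OF Fm_unitary[OF Npos] H F G] .
    finally show ?thesis by simp
  qed
  define y where "y = ?H *\<^sub>v ?v"
  have y: "y \<in> carrier_vec (N*N)" unfolding y_def using FH_c by simp
  have Fy: "?F *\<^sub>v y = ?v" unfolding y_def using FH_c Fm_unitary'[OF Npos]
    by (simp flip: assoc_mult_mat_vec[OF Fm_carrier FH_c vm_carrier])
  have "?G *\<^sub>v y = ?H *\<^sub>v (?M *\<^sub>v (?F *\<^sub>v y))" unfolding GM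
    using assoc_mult_mat_vec[OF mult_carrier_mat[OF FH_c rep_map_carrier] Fm_carrier y]
      assoc_mult_mat_vec[OF FH_c rep_map_carrier mult_mat_vec_carrier[OF Fm_carrier y]] by simp
  also have "\<dots> = ?H *\<^sub>v (lam \<cdot>\<^sub>v ?v)" using Fy Mv by simp
  also have "\<dots> = lam \<cdot>\<^sub>v y" unfolding y_def using mult_mat_vec[OF FH_c vm_carrier] by simp
  finally have ev: "?G *\<^sub>v y = lam \<cdot>\<^sub>v y" .
  have "y \<noteq> 0\<^sub>v (N*N)"
  proof
    assume "y = 0\<^sub>v (N*N)"
    moreover have "Fm N *\<^sub>v 0\<^sub>v (N*N) = 0\<^sub>v (N*N)"
      by (rule eq_vecI) (auto simp: mv_entry[OF Fm_carrier zero_carrier_vec])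
    ultimately have "?v = 0\<^sub>v (N*N)" using Fy by simp
    then have "vm N X = vm N (0\<^sub>m N N)" using vm_zero by simp
    then show False using vm_inj[OF X(1) zero_carrier_mat] X(2) by blast
  qed
  then show ?thesis using y ev by blast
qed

lemma eig_bounds: assumes "is_eigenvalue N L lam" "lam \<noteq> 1"
  shows "exp (- (\<epsilon> * real N / pi)\<^sup>2) \<le> cmod lam \<and>
         cmod lam \<le> exp (- (1/2) * (\<epsilon> * real N / pi)\<^sup>2 * (sin (pi / real N))\<^sup>2)"
proof -
  obtain y where y: "y \<in> carrier_vec (N*N)" "y \<noteq> 0\<^sub>v (N*N)" "Gm N \<epsilon> U0 *\<^sub>v y = lam \<cdot>\<^sub>v y"
    using eig_G[OF assms(1)] by blast
  have "exp (- (\<epsilon> * real N / pi)\<^sup>2) \<le> cmod lam"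
    using Gsetup.eig_lower[OF Gs y, of "exp (- (\<epsilon> * real N / pi)\<^sup>2)"] ctilde_lower by simp
  moreover have "cmod lam \<le> cmax"
    using Gsetup.eig_upper[OF Gs y(1,2,3) Gsetup.eig_y0[OF Gs y(1,3) assms(2)], of cmax] c_le_cmax
    unfolding cmax_def by simp
  ultimately show ?thesis unfolding cmax_def by simp
qed

lemma fixed: "L ((1 / of_nat N) \<cdot>\<^sub>m 1\<^sub>m N) = (1 / of_nat N) \<cdot>\<^sub>m 1\<^sub>m N"
proof -
  have "Uch U0 (1\<^sub>m N) = 1\<^sub>m N"
    unfolding Uch_def using right_mult_one_mat[OF U0c] U0 unfolding unitary_mat_def by simp
  then have "Uch U0 ((1 / of_nat N) \<cdot>\<^sub>m 1\<^sub>m N) = (1 / of_nat N) \<cdot>\<^sub>m 1\<^sub>m N"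
    using lin_smult[OF Uch_lin[OF U0] one_carrier_mat] by simp
  moreover have "D (1\<^sub>m N) = 1\<^sub>m N"
  proof -
    have "D (transl N 0 0) = complex_of_real (ctilde N \<epsilon> 0 0) \<cdot>\<^sub>m transl N 0 0" using Dbasis Npos by blast
    then show ?thesis unfolding transl_00[OF Npos] ctilde_00 by (simp add: one_smult_mat')
  qed
  ultimately show ?thesis unfolding L_Uch using lin_smult[OF Dlin one_carrier_mat] by simp
qed

end


lemma prod_lin_nz: "(\<Prod>s\<in>#S. [:- h s, 1::complex:]) \<noteq> 0"
proof (induction S)
  case empty
  then show ?case by simp
next
  case (add x S)
  have "(\<Prod>s\<in>#add_mset x S. [:- h s, 1:]) = [:- h x, 1:] * (\<Prod>s\<in>#S. [:- h s, 1::complex:])" by simp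
  moreover have "[:- h x, 1::complex:] \<noteq> 0" by simp
  ultimately show ?case using add by (metis mult_eq_0_iff)
qed

lemma order_prod_lin: "order a (\<Prod>s\<in>#S. [:- h s, 1::complex:]) = count (image_mset h S) a"
proof (induction S)
  case empty
  have "poly (1::complex poly) a \<noteq> 0" by simp
  then show ?case using order_root[of "1::complex poly" a] by simp
next
  case (add x S)
  have "(\<Prod>s\<in>#add_mset x S. [:- h s, 1:]) = [:- h x, 1:] * (\<Prod>s\<in>#S. [:- h s, 1::complex:])" by simp
  moreover have "[:- h x, 1:] * (\<Prod>s\<in>#S. [:- h s, 1::complex:]) \<noteq> 0"
    using prod_lin_nz[of h S] by (metis mult_eq_0_iff pCons_eq_0_iff one_neq_zero)
  ultimately have "order a (\<Prod>s\<in>#add_mset x S. [:- h s, 1:]) = order a [:- h x, 1:] + order a (\<Prod>s\<in>#S. [:- h s, 1::complex:])"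
    using order_mult by metis
  then show ?case using add order_linear'[of a "- h x"] by auto
qed

lemma mset_unique: fixes S T :: "real multiset"
  assumes "\<forall>s\<in>#S. 0 \<le> s" "\<forall>s\<in>#T. 0 \<le> s"
    and "(\<Prod>s\<in>#S. [:- complex_of_real (s\<^sup>2), 1:]) = (\<Prod>s\<in>#T. [:- complex_of_real (s\<^sup>2), 1:])"
  shows "S = T"
proof -
  let ?h = "\<lambda>s. complex_of_real (s\<^sup>2)"
  have "image_mset ?h S = image_mset ?h T"
  proof (rule multiset_eqI)
    fix a
    show "count (image_mset ?h S) a = count (image_mset ?h T) a"
      using order_prod_lin[of a ?h S] order_prod_lin[of a ?h T] assms(3) by simp
  qed
  then have "image_mset (\<lambda>z. sqrt (Re z)) (image_mset ?h S) = image_mset (\<lambda>z. sqrt (Re z)) (image_mset ?h T)"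
    by simp
  moreover have "image_mset (\<lambda>z. sqrt (Re z)) (image_mset ?h M) = M" if "\<forall>s\<in>#M. 0 \<le> s" for M
  proof -
    have "image_mset (\<lambda>z. sqrt (Re z)) (image_mset ?h M) = image_mset (\<lambda>s. sqrt (s\<^sup>2)) M"
      by (simp add: multiset.map_comp comp_def)
    also have "\<dots> = image_mset id M" using that by (intro image_mset_cong) auto
    finally show ?thesis by simp
  qed
  ultimately show ?thesis using assms(1,2) by simp
qed

lemma prod_S0: fixes f :: "real \<Rightarrow> 'a::comm_monoid_mult"
  shows "(\<Prod>s\<in>#image_mset (\<lambda>(\<mu>, \<nu>). ctilde N \<epsilon> \<mu> \<nu>) (mset_set ({..<N} \<times> {..<N})). f s)
     = (\<Prod>k<N*N. f (ctilde N \<epsilon> (k div N) (k mod N)))"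
proof -
  have "(\<Prod>s\<in>#image_mset (\<lambda>(\<mu>, \<nu>). ctilde N \<epsilon> \<mu> \<nu>) (mset_set ({..<N} \<times> {..<N})). f s)
      = (\<Prod>x\<in>{..<N} \<times> {..<N}. f (ctilde N \<epsilon> (fst x) (snd x)))"
    by (simp add: prod_unfold_prod_mset multiset.map_comp comp_def case_prod_beta)
  also have "\<dots> = (\<Prod>k<N*N. f (ctilde N \<epsilon> (k div N) (k mod N)))"
    using prod.reindex_bij_betw[OF bij_pairs, of "\<lambda>x. f (ctilde N \<epsilon> (fst x) (snd x))"] by simp
  finally show ?thesis .
qed

context
  fixes N :: nat and \<epsilon> :: real and U0 :: "complex mat" and D L :: "complex mat \<Rightarrow> complex mat"
  assumes N2: "N \<ge> 2" and eps: "\<epsilon> > 0" and U0: "unitary_mat N U0" and Dlin: "linear_on_mats N D"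
    and Dbasis: "\<forall>\<mu> < N. \<forall>\<nu> < N. D (transl N \<mu> \<nu>) = complex_of_real (ctilde N \<epsilon> \<mu> \<nu>) \<cdot>\<^sub>m transl N \<mu> \<nu>"
    and Ldef: "\<forall>\<rho>. L \<rho> = D (U0 * \<rho> * mat_adjoint U0)"
begin

lemmas ctx = N2 eps U0 Dlin Dbasis Ldef

lemma MHM: "char_poly (mat_adjoint (rep_map N L) * rep_map N L) = char_poly (mat_adjoint (Gm N \<epsilon> U0) * Gm N \<epsilon> U0)"
proof -
  have Np: "N > 0" using N2 by simp
  let ?F = "Fm N" and ?H = "mat_adjoint (Fm N)" and ?G = "Gm N \<epsilon> U0" and ?GH = "mat_adjoint (Gm N \<epsilon> U0)"
  note F = Fm_carrier[of N] and H = adj_carrier[OF Fm_carrier[of N]] and G = Gm_carrier[of N \<epsilon> U0] and GH = adj_carrier[OF Gm_carrier[of N \<epsilon> U0]]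
  have FG: "?F * ?G \<in> carrier_mat (N*N) (N*N)" using mult_carrier_mat[OF F G] .
  have GHH: "?GH * ?H \<in> carrier_mat (N*N) (N*N)" using mult_carrier_mat[OF GH H] .
  have GHG: "?GH * ?G \<in> carrier_mat (N*N) (N*N)" using mult_carrier_mat[OF GH G] .
  have M: "rep_map N L = ?F * ?G * ?H" using M_eq[OF ctx] .
  have MH: "mat_adjoint (rep_map N L) = ?F * (?GH * ?H)"
    unfolding M adj_mult[OF FG H] adj_mult[OF F G] adj_adj[OF F] using assoc_mult_mat[OF F GH H] by simp
  have eqm: "mat_adjoint (rep_map N L) * rep_map N L = ?F * (?GH * ?G) * ?H"
  proof -
    have "?F * (?GH * ?H) * (?F * ?G * ?H) = ?F * ((?GH * ?H) * ((?F * ?G) * ?H))"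
      using assoc_mult_mat[OF F GHH mult_carrier_mat[OF FG H]] .
    also have "(?GH * ?H) * ((?F * ?G) * ?H) = ?GH * (?H * (?F * (?G * ?H)))"
      using assoc_mult_mat[OF GH H mult_carrier_mat[OF FG H]] assoc_mult_mat[OF F G H] by simp
    also have "?H * (?F * (?G * ?H)) = ?G * ?H"
      using cancel_left[OF Fm_unitary[OF Np] H F mult_carrier_mat[OF G H]] .
    also have "?GH * (?G * ?H) = ?GH * ?G * ?H" using assoc_mult_mat[OF GH G H] by simp
    also have "?F * (?GH * ?G * ?H) = ?F * (?GH * ?G) * ?H" using assoc_mult_mat[OF F GHG H] by simp
    finally have "?F * (?GH * ?H) * (?F * ?G * ?H) = ?F * (?GH * ?G) * ?H" .
    then show ?thesis by (simp only: MH[symmetric] M[symmetric])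
  qed
  have "similar_mat (mat_adjoint (rep_map N L) * rep_map N L) (?GH * ?G)"
    unfolding similar_mat_def
    by (rule exI, rule exI, rule similar_mat_witI[OF Fm_unitary'[OF Np] Fm_unitary[OF Np] eqm
      mult_carrier_mat[OF adj_carrier[OF rep_map_carrier] rep_map_carrier] GHG F H])
  then show ?thesis by (rule char_poly_similar)
qed

lemma sv: "singular_values N L = image_mset (\<lambda>(\<mu>, \<nu>). ctilde N \<epsilon> \<mu> \<nu>) (mset_set ({..<N} \<times> {..<N}))"
proof -
  let ?S0 = "image_mset (\<lambda>(\<mu>, \<nu>). ctilde N \<epsilon> \<mu> \<nu>) (mset_set ({..<N} \<times> {..<N}))"
  have cp: "char_poly (mat_adjoint (rep_map N L) * rep_map N L) = (\<Prod>s\<in>#?S0. [:- complex_of_real (s\<^sup>2), 1:])"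
    unfolding MHM Gsetup.charpoly_GHG[OF Gs[OF ctx]] prod_S0 ..
  have nn: "\<forall>s\<in>#?S0. 0 \<le> s" using ctilde_nn by auto
  show ?thesis unfolding singular_values_def
  proof (rule the_equality)
    show "(\<forall>s\<in>#?S0. 0 \<le> s) \<and> char_poly (mat_adjoint (rep_map N L) * rep_map N L) = (\<Prod>s\<in>#?S0. [:- complex_of_real (s\<^sup>2), 1:])"
      using nn cp by simp
  next
    fix S assume "(\<forall>s\<in>#S. 0 \<le> s) \<and> char_poly (mat_adjoint (rep_map N L) * rep_map N L) = (\<Prod>s\<in>#S. [:- complex_of_real (s\<^sup>2), 1:])"
    then have a1: "\<forall>s\<in>#S. 0 \<le> s"
      and a2: "char_poly (mat_adjoint (rep_map N L) * rep_map N L) = (\<Prod>s\<in>#S. [:- complex_of_real (s\<^sup>2), 1:])"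
      by blast+
    show "S = ?S0" using mset_unique[OF a1 nn trans[OF sym[OF a2] cp]] .
  qed
qed

end


definition rti :: "nat \<Rightarrow> int \<Rightarrow> complex" where
  "rti N z = exp (2 * pi * \<i> * of_int z / of_nat N)"

lemma rt_rti: "rt N m = rti N (int m)"
  unfolding rt_def rti_def by simp

lemma rti_add: "rti N (a + b) = rti N a * rti N b"
  unfolding rti_def by (simp add: exp_add[symmetric] add_divide_distrib distrib_left)

lemma rti_0[simp]: "rti N 0 = 1" by (simp add: rti_def)

lemma rti_Nnat: assumes "N > 0" shows "rti N (int N * int m) = 1"
  using rt_mult_N'[OF assms, of m] unfolding rt_rti by simp

lemma rti_N: assumes "N > 0" shows "rti N (int N * k) = 1"
proof (cases "k \<ge> 0")
  case True
  then obtain m where "k = int m" by (metis nonneg_int_cases)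
  then show ?thesis using rti_Nnat[OF assms] by simp
next
  case False
  then obtain m where m: "k = - int m" by (metis neg_int_cases less_le not_le)
  have "rti N (int N * k) * rti N (int N * int m) = rti N 0"
    unfolding rti_add[symmetric] m by simp
  then show ?thesis using rti_Nnat[OF assms, of m] by simp
qed

lemma rti_cong: assumes "N > 0" "a mod int N = b mod int N" shows "rti N a = rti N b"
proof -
  have "int N dvd a - b" using assms(2) by (simp add: mod_eq_dvd_iff)
  then obtain k where "a - b = int N * k" by (auto elim: dvdE)
  then have "a = b + int N * k" by simp
  then show ?thesis using rti_add rti_N[OF assms(1)] by simp
qed

lemma rti_norm: "cmod (rti N a) = 1"
  unfolding rti_def norm_exp_eq_Re by simp

lemma cnj_rti: "cnj (rti N a) = rti N (- a)"
proof -
  have a: "rti N a * rti N (- a) = 1" unfolding rti_add[symmetric] by simp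
  have b: "cnj (rti N a) * rti N a = 1" by (rule unit_cnj[OF rti_norm])
  then have "rti N a \<noteq> 0" by auto
  then show ?thesis using a b by (metis mult.commute mult.left_neutral mult.assoc)
qed

lemma ph_nz: "ph N q p \<noteq> 0" unfolding ph_def by simp

lemma modflip: fixes i j q N :: nat assumes "q < N" "i < N" "j < N"
  shows "j = (i + q) mod N \<longleftrightarrow> i = (j + (N - q) mod N) mod N"
proof
  assume j: "j = (i + q) mod N"
  have "(j + (N - q) mod N) mod N = ((i + q) + (N - q)) mod N"
    unfolding j by (simp add: mod_add_eq)
  also have "(i + q) + (N - q) = i + N" using assms by simp
  finally show "i = (j + (N - q) mod N) mod N" using assms by simp
next
  assume i: "i = (j + (N - q) mod N) mod N"
  have "(i + q) mod N = (j + (N - q) mod N + q) mod N"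
    unfolding i by (rule mod_add_left_eq)
  also have "\<dots> = ((N - q) mod N + (j + q)) mod N" by (rule arg_cong[where f="\<lambda>x. x mod N"]) simp
  also have "\<dots> = ((N - q) + (j + q)) mod N" by (rule mod_add_left_eq)
  also have "(N - q) + (j + q) = (j + (N - q)) + q" by simp
  also have "(j + (N - q)) + q = j + N" using assms by simp
  finally show "j = (i + q) mod N" using assms by simp
qed

lemma phase_cong: fixes i q p N :: nat assumes N: "N > 0" and "q < N" "p < N"
  shows "rti N (- (int i * int p)) = rti N (int q * int p) * rt N ((i + q) mod N * ((N - p) mod N))"
proof -
  let ?j = "int ((i + q) mod N)" and ?p' = "int ((N - p) mod N)"
  have j: "?j mod int N = (int i + int q) mod int N" by (simp add: zmod_int)
  have p': "?p' mod int N = (int N - int p) mod int N" using assms by (simp add: zmod_int of_nat_diff)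
  have "(?j * ?p') mod int N = ((int i + int q) * (int N - int p)) mod int N"
    by (metis j p' mod_mult_eq)
  then have "(int q * int p + ?j * ?p') mod int N = (int q * int p + (int i + int q) * (int N - int p)) mod int N"
    by (metis mod_add_right_eq)
  also have "int q * int p + (int i + int q) * (int N - int p) = - (int i * int p) + int N * (int i + int q)"
    by (simp add: algebra_simps)
  also have "(- (int i * int p) + int N * (int i + int q)) mod int N = (- (int i * int p)) mod int N"
    by (rule mod_mult_self2)
  finally have "(- (int i * int p)) mod int N = (int q * int p + ?j * ?p') mod int N" by simp
  then have "rti N (- (int i * int p)) = rti N (int q * int p + ?j * ?p')" by (rule rti_cong[OF N])
  then show ?thesis unfolding rti_add rt_rti by simp
qed

lemma transl_adj: assumes N: "N > 0" and q: "q < N" and p: "p < N"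
  shows "mat_adjoint (transl N q p) =
    (cnj (ph N q p) * rti N (int q * int p) / ph N ((N - q) mod N) ((N - p) mod N)) \<cdot>\<^sub>m transl N ((N - q) mod N) ((N - p) mod N)"
  (is "_ = ?a \<cdot>\<^sub>m ?T")
proof (rule eq_matI)
  fix i j assume "i < dim_row (?a \<cdot>\<^sub>m ?T)" "j < dim_col (?a \<cdot>\<^sub>m ?T)"
  then have i: "i < N" and j: "j < N" by auto
  have lhs: "mat_adjoint (transl N q p) $$ (i,j) = cnj (ph N q p) * (if j = (i + q) mod N then rti N (- (int i * int p)) else 0)"
    using i j by (simp add: adj_index[OF transl_carrier] transl_entry rt_rti cnj_rti)
  have rhs: "(?a \<cdot>\<^sub>m ?T) $$ (i,j) = ?a * (ph N ((N - q) mod N) ((N - p) mod N) *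
     (if i = (j + (N - q) mod N) mod N then rt N (j * ((N - p) mod N)) else 0))"
    using i j by (simp add: transl_entry)
  show "mat_adjoint (transl N q p) $$ (i,j) = (?a \<cdot>\<^sub>m ?T) $$ (i,j)"
  proof (cases "j = (i + q) mod N")
    case True
    then have c: "i = (j + (N - q) mod N) mod N" using modflip[OF q i j] by simp
    show ?thesis unfolding lhs rhs using True c phase_cong[OF N q p, of i] ph_nz[of N "(N - q) mod N" "(N - p) mod N"]
      by simp
  next
    case False
    then have c: "i \<noteq> (j + (N - q) mod N) mod N" using modflip[OF q i j] by simp
    show ?thesis unfolding lhs rhs using False c by simp
  qed
qed auto

lemma sin_flip: assumes "q < N" "N > 0"
  shows "(sin (pi * real ((N - q) mod N) / real N))\<^sup>2 = (sin (pi * real q / real N))\<^sup>2"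
proof (cases "q = 0")
  case True then show ?thesis by simp
next
  case False
  then have "(N - q) mod N = N - q" using assms by simp
  moreover have "pi * real (N - q) / real N = pi - pi * real q / real N"
    using assms by (simp add: of_nat_diff field_simps)
  ultimately show ?thesis by simp
qed

lemma ctilde_flip: assumes "q < N" "p < N"
  shows "ctilde N \<epsilon> ((N - q) mod N) ((N - p) mod N) = ctilde N \<epsilon> q p"
  unfolding ctilde_def using sin_flip[OF assms(1)] sin_flip[OF assms(2)] assms by simp

lemma adj_add: fixes A B :: "complex mat" assumes "A \<in> carrier_mat n m" "B \<in> carrier_mat n m"
  shows "mat_adjoint (A + B) = mat_adjoint A + mat_adjoint B"
proof -
  have AB: "A + B \<in> carrier_mat n m" using assms by simp
  show ?thesis
    by (rule eq_matI) (use assms AB in \<open>auto simp: adj_index[OF AB] adj_index[OF assms(1)] adj_index[OF assms(2)]\<close>)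
qed

lemma adj_smult: fixes A :: "complex mat" assumes "A \<in> carrier_mat n m"
  shows "mat_adjoint (a \<cdot>\<^sub>m A) = cnj a \<cdot>\<^sub>m mat_adjoint A"
  by (rule eq_matI) (use assms in \<open>auto simp: adj_index[OF smult_carrier_mat[OF assms]] adj_index[OF assms]\<close>)

lemma adj_zero: "mat_adjoint (0\<^sub>m n m :: complex mat) = 0\<^sub>m m n"
  by (rule eq_matI) (auto simp: adj_index[OF zero_carrier_mat])

lemma smult_comm_mat: "a \<cdot>\<^sub>m (b \<cdot>\<^sub>m (A :: complex mat)) = b \<cdot>\<^sub>m (a \<cdot>\<^sub>m A)"
  by (rule eq_matI) auto

context
  fixes N :: nat and \<epsilon> :: real and U0 :: "complex mat" and D L :: "complex mat \<Rightarrow> complex mat"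
  assumes N2: "N \<ge> 2" and eps: "\<epsilon> > 0" and U0: "unitary_mat N U0" and Dlin: "linear_on_mats N D"
    and Dbasis: "\<forall>\<mu> < N. \<forall>\<nu> < N. D (transl N \<mu> \<nu>) = complex_of_real (ctilde N \<epsilon> \<mu> \<nu>) \<cdot>\<^sub>m transl N \<mu> \<nu>"
    and Ldef: "\<forall>\<rho>. L \<rho> = D (U0 * \<rho> * mat_adjoint U0)"
begin

lemma D2lin: "linear_on_mats N (\<lambda>X. mat_adjoint (D (mat_adjoint X)))"
  unfolding linear_on_mats_def
proof (intro conjI ballI allI)
  fix A :: "complex mat" assume A: "A \<in> carrier_mat N N"
  show "mat_adjoint (D (mat_adjoint A)) \<in> carrier_mat N N"
    using adj_carrier[OF lin_carrier[OF Dlin adj_carrier[OF A]]] .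
next
  fix A B :: "complex mat" assume A: "A \<in> carrier_mat N N" and B: "B \<in> carrier_mat N N"
  note AH = adj_carrier[OF A] and BH = adj_carrier[OF B]
  show "mat_adjoint (D (mat_adjoint (A + B))) = mat_adjoint (D (mat_adjoint A)) + mat_adjoint (D (mat_adjoint B))"
    unfolding adj_add[OF A B] lin_add[OF Dlin AH BH]
    using adj_add[OF lin_carrier[OF Dlin AH] lin_carrier[OF Dlin BH]] .
next
  fix a and A :: "complex mat" assume A: "A \<in> carrier_mat N N"
  note AH = adj_carrier[OF A]
  show "mat_adjoint (D (mat_adjoint (a \<cdot>\<^sub>m A))) = a \<cdot>\<^sub>m mat_adjoint (D (mat_adjoint A))"
    unfolding adj_smult[OF A] lin_smult[OF Dlin AH] adj_smult[OF lin_carrier[OF Dlin AH]] by simp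
qed

lemma D2_transl: assumes q: "q < N" and p: "p < N"
  shows "mat_adjoint (D (mat_adjoint (transl N q p))) = D (transl N q p)"
proof -
  have Np: "N > 0" using N2 by simp
  let ?q = "(N - q) mod N" and ?p = "(N - p) mod N"
  let ?a = "cnj (ph N q p) * rti N (int q * int p) / ph N ?q ?p"
  let ?c = "complex_of_real (ctilde N \<epsilon> q p)"
  have q': "?q < N" and p': "?p < N" using Np by auto
  have "D (mat_adjoint (transl N q p)) = ?a \<cdot>\<^sub>m D (transl N ?q ?p)"
    unfolding transl_adj[OF Np q p] using lin_smult[OF Dlin transl_carrier] by simp
  also have "\<dots> = ?a \<cdot>\<^sub>m (?c \<cdot>\<^sub>m transl N ?q ?p)"
    using Dbasis q' p' ctilde_flip[OF q p] by simp
  also have "\<dots> = ?c \<cdot>\<^sub>m mat_adjoint (transl N q p)"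
    unfolding transl_adj[OF Np q p] by (rule smult_comm_mat)
  finally have "mat_adjoint (D (mat_adjoint (transl N q p))) = mat_adjoint (?c \<cdot>\<^sub>m mat_adjoint (transl N q p))" by simp
  also have "\<dots> = ?c \<cdot>\<^sub>m transl N q p"
    unfolding adj_smult[OF adj_carrier[OF transl_carrier]] adj_adj[OF transl_carrier] by simp
  finally show ?thesis using Dbasis q p by simp
qed

lemma D_adj: assumes X: "X \<in> carrier_mat N N" shows "D (mat_adjoint X) = mat_adjoint (D X)"
proof -
  have Np: "N > 0" using N2 by simp
  have "mat_adjoint (D (mat_adjoint X)) = D X"
    using lin_agree[OF Np D2lin Dlin _ X] D2_transl by blast
  then have "mat_adjoint (mat_adjoint (D (mat_adjoint X))) = mat_adjoint (D X)" by simp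
  then show ?thesis using adj_adj[OF lin_carrier[OF Dlin adj_carrier[OF X]]] by simp
qed

lemma sym_eig: assumes "is_eigenvalue N L lam" shows "is_eigenvalue N L (cnj lam)"
proof -
  obtain X where X: "X \<in> carrier_mat N N" "X \<noteq> 0\<^sub>m N N" "L X = lam \<cdot>\<^sub>m X"
    using assms unfolding is_eigenvalue_def by auto
  have U: "U0 \<in> carrier_mat N N" using unitary_carrier[OF U0] .
  note XH = adj_carrier[OF X(1)]
  have UX: "U0 * X \<in> carrier_mat N N" using mult_carrier_mat[OF U X(1)] .
  have Uadj: "U0 * mat_adjoint X * mat_adjoint U0 = mat_adjoint (U0 * X * mat_adjoint U0)"
    unfolding adj_mult[OF UX adj_carrier[OF U]] adj_mult[OF U X(1)] adj_adj[OF U]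
    using assoc_mult_mat[OF U XH adj_carrier[OF U]] by simp
  have "L (mat_adjoint X) = D (mat_adjoint (U0 * X * mat_adjoint U0))" using Ldef Uadj by simp
  also have "\<dots> = mat_adjoint (L X)"
    using D_adj[OF mult_carrier_mat[OF UX adj_carrier[OF U]]] Ldef by simp
  also have "\<dots> = cnj lam \<cdot>\<^sub>m mat_adjoint X" unfolding X(3) adj_smult[OF X(1)] ..
  finally have ev: "L (mat_adjoint X) = cnj lam \<cdot>\<^sub>m mat_adjoint X" .
  have nz: "mat_adjoint X \<noteq> 0\<^sub>m N N"
  proof
    assume "mat_adjoint X = 0\<^sub>m N N"
    then have "mat_adjoint (mat_adjoint X) = 0\<^sub>m N N" using adj_zero by simp
    then show False using adj_adj[OF X(1)] X(2) by simp
  qed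
  show ?thesis unfolding is_eigenvalue_def using XH nz ev by blast
qed

end


theorem mainTheorem2:
  fixes N :: nat and \<epsilon> :: real and U0 :: "complex mat"
    and D L :: "complex mat \<Rightarrow> complex mat"
  assumes N2: "N \<ge> 2"
    and eps: "\<epsilon> > 0"
    and U0: "unitary_mat N U0"
    and Dlin: "linear_on_mats N D"
    and Dbasis: "\<forall>\<mu> < N. \<forall>\<nu> < N.
        D (transl N \<mu> \<nu>) = complex_of_real (ctilde N \<epsilon> \<mu> \<nu>) \<cdot>\<^sub>m transl N \<mu> \<nu>"
    and Ldef: "\<forall>\<rho>. L \<rho> = D (U0 * \<rho> * mat_adjoint U0)"
  shows "L ((1 / of_nat N) \<cdot>\<^sub>m 1\<^sub>m N) = (1 / of_nat N) \<cdot>\<^sub>m 1\<^sub>m N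
       \<and> alg_mult N L 1 = 1
       \<and> (\<forall>lam. is_eigenvalue N L lam \<longrightarrow> is_eigenvalue N L (cnj lam))
       \<and> singular_values N L =
           image_mset (\<lambda>(\<mu>, \<nu>). ctilde N \<epsilon> \<mu> \<nu>) (mset_set ({..<N} \<times> {..<N}))
       \<and> (\<forall>lam. is_eigenvalue N L lam \<and> lam \<noteq> 1 \<longrightarrow>
            exp (- (\<epsilon> * real N / pi)\<^sup>2) \<le> cmod lam \<and>
            cmod lam \<le> exp (- (1/2) * (\<epsilon> * real N / pi)\<^sup>2 * (sin (pi / real N))\<^sup>2))"
proof -
  note c = N2 eps U0 Dlin Dbasis Ldef
  show ?thesis using fixed[OF c] alg1[OF c] sym_eig[OF c] sv[OF c] eig_bounds[OF c] by blast
qed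

end
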